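(* Let $G$ be a group, $\mathcal H=\{H_1,\ldots,H_m\}$ a collection of subgroups of $G$, and $X$ a finite relative generating set of $G$ with respect to $\mathcal H$. The following are equivalent: (i) the relative Cayley graph $\Gamma^{rel}=\Gamma^{rel}_X(G)$ is hyperbolic; (ii) the left coset graph $\widetilde\Gamma=\widetilde\Gamma_X(G)$ is hyperbolic. Moreover, if $G$ is generated by $X$ in the usual (non-relative) sense, then (i) and (ii) are also equivalent to: (iii) the coned-off Cayley graph $\widehat\Gamma=\widehat\Gamma_X(G)$ is hyperbolic.
   Context: $X\subset G$ is a relative generating set with respect to $\mathcal H$ if $G$ is generated by $X\cup H_1\cup\cdots\cup H_m$. The relative Cayley graph $\Gamma^{rel}_X(G)$ is the Cayley graph of $G$ with respect to the generating set $X\cup H_1\cup\cdots\cup H_m$. The left coset graph $\widetilde\Gamma_X(G)$ is the oriented graph whose vertex set is $\{gH_i : i=1,\ldots,m,\ g\in G\}$, and for two different cosets $fH_i$, $gH_j$ there is an edge from $fH_i$ to $gH_j$ if and only if there exist $a\in fH_i$, $b\in gH_j$ with $b=ax$ for some $x\in X\cup X^{-1}\cup\{1\}$ (the edge is labelled $(i,j,x)$). If $G$ is generated by $X$, the coned-off Cayley graph $\widehat\Gamma_X(G)$ is obtained from the Cayley graph $\Gamma_X(G)$ by adding, for each left coset $gH_i$ ($i=1,\ldots,m$), a new vertex $v(gH_i)$ and an edge of length $1/2$ from each element of $gH_i$ to $v(gH_i)$. All graphs carry their path metrics (edges of the Cayley graphs have length 1). Hyperbolic means Gromov hyperbolic as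 a geodesic metric space. *)

theory Defs
  imports "HOL-Algebra.Algebra"
begin

text \<open>A (undirected) weighted graph is given by a vertex set V and a set E of
  edges (a, b, l) joining a and b, of length l.  Edges are traversed in both
  directions.\<close>

fun wchain :: "('v \<times> 'v \<times> real) set \<Rightarrow> 'v \<Rightarrow> ('v \<times> 'v \<times> real) list \<Rightarrow> 'v \<Rightarrow> bool" where
  "wchain E u [] v = (u = v)"
| "wchain E u ((a, b, l) # es) v =
     (((a, b, l) \<in> E \<or> (b, a, l) \<in> E) \<and> a = u \<and> wchain E b es v)"

definition walk_length :: "('v \<times> 'v \<times> real) list \<Rightarrow> real" where
  "walk_length es = sum_list (map (\<lambda>(a, b, l). l) es)"

definition gdist :: "('v \<times> 'v \<times> real) set \<Rightarrow> 'v \<Rightarrow> 'v \<Rightarrow> real" where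
  "gdist E u v = Inf {walk_length es | es. wchain E u es v}"

definition graph_connected :: "'v set \<Rightarrow> ('v \<times> 'v \<times> real) set \<Rightarrow> bool" where
  "graph_connected V E \<longleftrightarrow> (\<forall>u\<in>V. \<forall>v\<in>V. \<exists>es. wchain E u es v)"

definition gromov_product :: "('v \<Rightarrow> 'v \<Rightarrow> real) \<Rightarrow> 'v \<Rightarrow> 'v \<Rightarrow> 'v \<Rightarrow> real" where
  "gromov_product d w x y = (d w x + d w y - d x y) / 2"

definition hyperbolic_graph :: "'v set \<Rightarrow> ('v \<times> 'v \<times> real) set \<Rightarrow> bool" where
  "hyperbolic_graph V E \<longleftrightarrow> graph_connected V E \<and>
     (\<exists>\<delta>::real. \<forall>w\<in>V. \<forall>x\<in>V. \<forall>y\<in>V. \<forall>z\<in>V.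
        gromov_product (gdist E) w x z \<ge>
          min (gromov_product (gdist E) w x y) (gromov_product (gdist E) w y z) - \<delta>)"

definition rel_cayley_edges ::
  "('a, 'b) monoid_scheme \<Rightarrow> 'a set \<Rightarrow> (nat \<Rightarrow> 'a set) \<Rightarrow> nat \<Rightarrow> ('a \<times> 'a \<times> real) set" where
  "rel_cayley_edges Gr S H m =
     {(g, monoid.mult Gr g s, 1) | g s. g \<in> carrier Gr \<and> s \<in> S \<union> (\<Union>i\<in>{1..m}. H i)}"

definition coset_vertices ::
  "('a, 'b) monoid_scheme \<Rightarrow> (nat \<Rightarrow> 'a set) \<Rightarrow> nat \<Rightarrow> (nat \<times> 'a set) set" where
  "coset_vertices Gr H m = {(i, l_coset Gr g (H i)) | i g. i \<in> {1..m} \<and> g \<in> carrier Gr}"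

definition coset_edges ::
  "('a, 'b) monoid_scheme \<Rightarrow> 'a set \<Rightarrow> (nat \<Rightarrow> 'a set) \<Rightarrow> nat
     \<Rightarrow> ((nat \<times> 'a set) \<times> (nat \<times> 'a set) \<times> real) set" where
  "coset_edges Gr S H m =
     {(u, v, 1) | u v. u \<in> coset_vertices Gr H m \<and> v \<in> coset_vertices Gr H m \<and> u \<noteq> v \<and>
        (\<exists>a\<in>snd u. \<exists>b\<in>snd v. \<exists>x \<in> S \<union> (m_inv Gr ` S) \<union> {monoid.one Gr}. b = monoid.mult Gr a x)}"

definition coned_vertices ::
  "('a, 'b) monoid_scheme \<Rightarrow> (nat \<Rightarrow> 'a set) \<Rightarrow> nat \<Rightarrow> ('a + (nat \<times> 'a set)) set" where
  "coned_vertices Gr H m = Inl ` carrier Gr \<union> Inr ` coset_vertices Gr H m"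

definition coned_edges ::
  "('a, 'b) monoid_scheme \<Rightarrow> 'a set \<Rightarrow> (nat \<Rightarrow> 'a set) \<Rightarrow> nat
     \<Rightarrow> (('a + (nat \<times> 'a set)) \<times> ('a + (nat \<times> 'a set)) \<times> real) set" where
  "coned_edges Gr S H m =
     {(Inl g, Inl (monoid.mult Gr g x), 1) | g x. g \<in> carrier Gr \<and> x \<in> S}
     \<union> {(Inl g, Inr (i, l_coset Gr g (H i)), 1 / 2) | g i. g \<in> carrier Gr \<and> i \<in> {1..m}}"

end

theory Submission
  imports Defs
begin

definition metric_on :: "'v set \<Rightarrow> ('v \<Rightarrow> 'v \<Rightarrow> real) \<Rightarrow> bool" where
  "metric_on V d \<longleftrightarrow> (\<forall>x\<in>V. \<forall>y\<in>V. d x y \<ge> 0 \<and> d x y = d y x) \<and> (\<forall>x\<in>V. d x x = 0)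
     \<and> (\<forall>x\<in>V. \<forall>y\<in>V. \<forall>z\<in>V. d x z \<le> d x y + d y z)"

definition geod :: "'v set \<Rightarrow> ('v \<Rightarrow> 'v \<Rightarrow> real) \<Rightarrow> (nat \<Rightarrow> 'v) \<Rightarrow> nat \<Rightarrow> 'v \<Rightarrow> 'v \<Rightarrow> bool" where
  "geod V d p n x y \<longleftrightarrow> p 0 = x \<and> p n = y \<and> (\<forall>i\<le>n. p i \<in> V) \<and>
     (\<forall>i\<le>n. \<forall>j\<le>n. d (p i) (p j) = \<bar>real i - real j\<bar>)"

definition geodesic_space :: "'v set \<Rightarrow> ('v \<Rightarrow> 'v \<Rightarrow> real) \<Rightarrow> bool" where
  "geodesic_space V d \<longleftrightarrow> metric_on V d \<and> (\<forall>x\<in>V. \<forall>y\<in>V. \<exists>p n. geod V d p n x y)"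

definition fourpt :: "'v set \<Rightarrow> ('v \<Rightarrow> 'v \<Rightarrow> real) \<Rightarrow> real \<Rightarrow> bool" where
  "fourpt V d \<delta> \<longleftrightarrow> (\<forall>w\<in>V. \<forall>x\<in>V. \<forall>y\<in>V. \<forall>z\<in>V.
        gromov_product d w x z \<ge> min (gromov_product d w x y) (gromov_product d w y z) - \<delta>)"

definition slim :: "'v set \<Rightarrow> ('v \<Rightarrow> 'v \<Rightarrow> real) \<Rightarrow> real \<Rightarrow> bool" where
  "slim V d \<delta> \<longleftrightarrow> (\<forall>p n x y a na z b nb. geod V d p n x y \<longrightarrow> geod V d a na x z \<longrightarrow> geod V d b nb z y \<longrightarrow>
      (\<forall>i\<le>n. \<exists>j. (j \<le> na \<and> d (p i) (a j) \<le> \<delta>) \<or> (j \<le> nb \<and> d (p i) (b j) \<le> \<delta>)))"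

lemma metric_onD:
  assumes "metric_on V d"
  shows "x\<in>V \<Longrightarrow> y\<in>V \<Longrightarrow> d x y \<ge> 0" "x\<in>V \<Longrightarrow> y\<in>V \<Longrightarrow> d x y = d y x" "x\<in>V \<Longrightarrow> d x x = 0"
    "x\<in>V \<Longrightarrow> y\<in>V \<Longrightarrow> z\<in>V \<Longrightarrow> d x z \<le> d x y + d y z"
  using assms unfolding metric_on_def by blast+

lemma geodD:
  assumes "geod V d p n x y"
  shows "p 0 = x" "p n = y" "i \<le> n \<Longrightarrow> p i \<in> V" "i \<le> n \<Longrightarrow> j \<le> n \<Longrightarrow> d (p i) (p j) = \<bar>real i - real j\<bar>"
  using assms unfolding geod_def by auto

lemma geod_len: "geod V d p n x y \<Longrightarrow> d x y = real n"
  unfolding geod_def by (metis abs_of_nat diff_zero le0 of_nat_0 order_refl abs_minus_commute)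

lemma gp_le_iff: "gromov_product d w x y \<le> r \<longleftrightarrow> d w x + d w y - d x y \<le> 2 * r"
  unfolding gromov_product_def by auto
lemma gp_ge_iff: "r \<le> gromov_product d w x y \<longleftrightarrow> 2 * r \<le> d w x + d w y - d x y"
  unfolding gromov_product_def by auto

lemma geod_ends: "geod V d p n x y \<Longrightarrow> x \<in> V \<and> y \<in> V"
  by (metis geodD(1,2,3) le0 order_refl)

lemma geod_rev: "geod V d p n x y \<Longrightarrow> geod V d (\<lambda>i. p (n - i)) n y x"
  unfolding geod_def by (auto simp: of_nat_diff)

lemma geod_sub: "geod V d p n x y \<Longrightarrow> a \<le> b \<Longrightarrow> b \<le> n \<Longrightarrow> geod V d (\<lambda>i. p (a + i)) (b - a) (p a) (p b)"
  unfolding geod_def by auto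

lemma geod_gp_le:
  assumes m: "metric_on V d" and g: "geod V d p n x y" and i: "i \<le> n" and w: "w \<in> V"
  shows "gromov_product d w x y \<le> d w (p i)"
proof -
  have V: "x \<in> V" "y \<in> V" "p i \<in> V" using geod_ends[OF g] geodD(3)[OF g i] by auto
  have "d w x \<le> d w (p i) + d (p i) x" using metric_onD(4)[OF m w V(3) V(1)] .
  moreover have "d (p i) x = i" using geodD[OF g] i by (metis abs_of_nat diff_0_eq_0 le0 of_nat_0 diff_zero)
  moreover have "d w y \<le> d w (p i) + d (p i) y" using metric_onD(4)[OF m w V(3) V(2)] .
  moreover have "d (p i) y = real n - real i" using geodD[OF g] i by auto
  moreover have "d x y = n" using geod_len[OF g] .
  ultimately show ?thesis unfolding gp_le_iff by linarith
qed

lemma geod_dist_0: "geod V d p n x y \<Longrightarrow> i \<le> n \<Longrightarrow> d x (p i) = real i"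
  unfolding geod_def by force
lemma geod_dist_n: "geod V d p n x y \<Longrightarrow> i \<le> n \<Longrightarrow> d (p i) y = real n - real i"
  unfolding geod_def by force

lemma gp2: "2 * gromov_product d w x y = d w x + d w y - d x y"
  unfolding gromov_product_def by simp

lemma fourpt_near_geod:
  assumes m: "metric_on V d" and f: "fourpt V d \<delta>" and g: "geod V d p n x z" and w: "w \<in> V"
  shows "\<exists>k\<le>n. d w (p k) \<le> gromov_product d w x z + 2 * \<delta> + 1"
proof -
  have xz: "x \<in> V" "z \<in> V" using geod_ends[OF g] by auto
  define t where "t = gromov_product d x w z"
  have dxz: "d x z = n" using geod_len[OF g] .
  have s1: "d x w = d w x" "d z w = d w z" "d z x = d x z"
    using metric_onD(2)[OF m] xz w by metis+
  have tr1: "d x z \<le> d x w + d w z" "d w z \<le> d w x + d x z" "d w x \<le> d w z + d z x"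
    using metric_onD(4)[OF m] xz w by metis+
  have t0: "t \<ge> 0" using tr1 s1 gp2[of d x w z] unfolding t_def by linarith
  have tn: "t \<le> n" using tr1 s1 dxz gp2[of d x w z] unfolding t_def by linarith
  define k where "k = nat \<lfloor>t\<rfloor>"
  have kt: "real k \<le> t" "t < real k + 1" using t0 unfolding k_def by linarith+
  have kn: "k \<le> n" using kt tn by linarith
  define q where "q = p k"
  have qV: "q \<in> V" using geodD(3)[OF g kn] q_def by simp
  have dxq: "d x q = k" using geod_dist_0[OF g kn] q_def by simp
  have dqz: "d q z = real n - real k" using geod_dist_n[OF g kn] q_def by simp
  have s2: "d z q = d q z" "d q w = d w q" using metric_onD(2)[OF m] qV xz w by metis+
  have dzq: "d z q = real n - real k" using dqz s2 by linarith
  have f1: "gromov_product d x w q \<ge> min (gromov_product d x w z) (gromov_product d x z q) - \<delta>"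
    using f xz w qV unfolding fourpt_def by blast
  have f2: "gromov_product d z w q \<ge> min (gromov_product d z w x) (gromov_product d z x q) - \<delta>"
    using f xz w qV unfolding fourpt_def by blast
  have e1: "gromov_product d x z q = k" using dxz dxq dzq gp2[of d x z q] by linarith
  have e2: "gromov_product d z x q = real n - real k" using dxz dxq dzq s1 gp2[of d z x q]
    by linarith
  have e3: "gromov_product d z w x = real n - t" unfolding t_def using dxz s1 gp2[of d z w x] gp2[of d x w z]
    by linarith
  have "min (gromov_product d x w z) (gromov_product d x z q) = k" using e1 kt t_def by linarith
  hence "gromov_product d x w q \<ge> k - \<delta>" using f1 by linarith
  hence a1: "d w q \<le> d x w - k + 2 * \<delta>" using dxq s2 gp2[of d x w q] by linarith
  have "min (gromov_product d z w x) (gromov_product d z x q) \<ge> real n - real k - 1" using e2 e3 kt by linarith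
  hence "gromov_product d z w q \<ge> real n - real k - 1 - \<delta>" using f2 by linarith
  hence a2: "d w q \<le> d z w - (real n - real k) + 2 + 2 * \<delta>" using dzq s2 gp2[of d z w q]
    by linarith
  have "d w q \<le> gromov_product d w x z + 2 * \<delta> + 1"
    using a1 a2 dxz s1 gp2[of d w x z] by linarith
  thus ?thesis using kn q_def by blast
qed

lemma fourpt_slim:
  assumes m: "metric_on V d" and f: "fourpt V d \<delta>"
  shows "slim V d (3 * \<delta> + 1)"
  unfolding slim_def
proof (intro allI impI)
  fix p n x y a na z b nb i
  assume g: "geod V d p n x y" and ga: "geod V d a na x z" and gb: "geod V d b nb z y" and i: "i \<le> n"
  have V: "x \<in> V" "y \<in> V" "z \<in> V" using geod_ends[OF g] geod_ends[OF ga] by auto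
  define w where "w = p i"
  have w: "w \<in> V" using geodD(3)[OF g i] w_def by simp
  have "d w x = d x w" using metric_onD(2)[OF m w V(1)] .
  hence "gromov_product d w x y = 0"
    using geod_dist_0[OF g i] geod_dist_n[OF g i] geod_len[OF g] w_def gp2[of d w x y]
    by simp
  moreover have "gromov_product d w x y \<ge> min (gromov_product d w x z) (gromov_product d w z y) - \<delta>"
    using f V w unfolding fourpt_def by blast
  ultimately have "gromov_product d w x z \<le> \<delta> \<or> gromov_product d w z y \<le> \<delta>" by linarith
  thus "\<exists>j. (j \<le> na \<and> d (p i) (a j) \<le> 3 * \<delta> + 1) \<or> (j \<le> nb \<and> d (p i) (b j) \<le> 3 * \<delta> + 1)"
  proof
    assume "gromov_product d w x z \<le> \<delta>"
    then obtain k where "k \<le> na" "d w (a k) \<le> 3 * \<delta> + 1" using fourpt_near_geod[OF m f ga w] by force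
    thus ?thesis unfolding w_def by blast
  next
    assume "gromov_product d w z y \<le> \<delta>"
    then obtain k where "k \<le> nb" "d w (b k) \<le> 3 * \<delta> + 1" using fourpt_near_geod[OF m f gb w] by force
    thus ?thesis unfolding w_def by blast
  qed
qed

lemma slimD:
  assumes "slim V d \<delta>" "geod V d p n x y" "geod V d a na x z" "geod V d b nb z y" "i \<le> n"
  shows "\<exists>j. (j \<le> na \<and> d (p i) (a j) \<le> \<delta>) \<or> (j \<le> nb \<and> d (p i) (b j) \<le> \<delta>)"
  using assms unfolding slim_def by blast

lemma slim_mono:
  assumes "slim V d \<delta>" "\<delta> \<le> \<delta>'" shows "slim V d \<delta>'"
  unfolding slim_def
proof (intro allI impI)
  fix p n x y a na z b nb i
  assume h: "geod V d p n x y" "geod V d a na x z" "geod V d b nb z y" "i \<le> n"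
  then obtain j where "(j \<le> na \<and> d (p i) (a j) \<le> \<delta>) \<or> (j \<le> nb \<and> d (p i) (b j) \<le> \<delta>)"
    using slimD[OF assms(1)] by blast
  thus "\<exists>j. (j \<le> na \<and> d (p i) (a j) \<le> \<delta>') \<or> (j \<le> nb \<and> d (p i) (b j) \<le> \<delta>')" using assms(2) by force
qed



lemma slim_nonneg:
  assumes "slim V d \<delta>" "x \<in> V" "metric_on V d" shows "\<delta> \<ge> 0"
proof -
  have g: "geod V d (\<lambda>i. x) 0 x x" unfolding geod_def using assms(2) metric_onD(3)[OF assms(3)] by auto
  from slimD[OF assms(1) g g g, of 0] obtain j where "d x x \<le> \<delta>" by auto
  thus ?thesis using metric_onD(3)[OF assms(3) assms(2)] by simp
qed

lemma slim_near_geod: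
  assumes m: "metric_on V d" and gs: "geodesic_space V d" and sl: "slim V d \<delta>" and g: "geod V d p n x y" and w: "w \<in> V"
  shows "\<exists>k\<le>n. d w (p k) \<le> gromov_product d w x y + 2 * \<delta> + 1"
proof -
  have xy: "x \<in> V" "y \<in> V" using geod_ends[OF g] by auto
  obtain a na where ga: "geod V d a na x w" using gs xy w unfolding geodesic_space_def by blast
  obtain b nb where gb0: "geod V d b nb y w" using gs xy w unfolding geodesic_space_def by blast
  have gb: "geod V d (\<lambda>i. b (nb - i)) nb w y" using geod_rev[OF gb0] .
  have d0: "\<delta> \<ge> 0" using slim_nonneg[OF sl xy(1) m] .
  define A where "A = {i. i \<le> n \<and> (\<exists>j\<le>na. d (p i) (a j) \<le> \<delta>)}"
  have A0: "0 \<in> A" unfolding A_def using geodD(1)[OF g] geodD(1)[OF ga] metric_onD(3)[OF m xy(1)] d0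
    by (metis (mono_tags, lifting) le0 mem_Collect_eq)
  moreover have fA: "finite A" unfolding A_def by simp
  have i0A: "Max A \<in> A" using Max_in[OF fA] A0 by blast
  have i0max: "\<And>i. i \<in> A \<Longrightarrow> i \<le> Max A" using Max_ge[OF fA] by blast
  define i0 where "i0 = Max A"
  obtain j where j: "j \<le> na" "d (p i0) (a j) \<le> \<delta>" and i0n: "i0 \<le> n" using i0A unfolding A_def i0_def by blast
  have wa: "d w (a j) = real na - real j" using geod_dist_n[OF ga j(1)] metric_onD(2)[OF m] geodD(3)[OF ga j(1)] w
    by metis
  have xa: "d x (a j) = real j" using geod_dist_0[OF ga j(1)] .
  have pV: "p i0 \<in> V" using geodD(3)[OF g i0n] .
  have aV: "a j \<in> V" using geodD(3)[OF ga j(1)] .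
  have dwx: "d w x = na" using geod_len[OF ga] metric_onD(2)[OF m xy(1) w] by simp
  have xp: "d x (p i0) = real i0" using geod_dist_0[OF g i0n] .
  have py: "d (p i0) y = real n - real i0" using geod_dist_n[OF g i0n] .
  have dxy: "d x y = n" using geod_len[OF g] .
  have t1: "d w (p i0) \<le> d w (a j) + d (a j) (p i0)" using metric_onD(4)[OF m w aV pV] .
  have t2: "d x (p i0) \<le> d x (a j) + d (a j) (p i0)" using metric_onD(4)[OF m xy(1) aV pV] .
  have s1: "d (a j) (p i0) = d (p i0) (a j)" using metric_onD(2)[OF m aV pV] .
  show ?thesis
  proof (cases "i0 = n")
    case True
    have "d w y = d w (p i0)" using True geodD(2)[OF g] by simp
    hence "d w y + n \<le> na + 2 * \<delta>" using t1 t2 s1 wa xa xp j(2) True by linarith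
    hence "d w (p n) \<le> gromov_product d w x y + 2 * \<delta> + 1"
      using gp2[of d w x y] dwx dxy geodD(2)[OF g] d0 by simp
    thus ?thesis by blast
  next
    case False
    hence i1: "Suc i0 \<le> n" using i0n by simp
    hence "Suc i0 \<notin> A" using i0max i0_def by fastforce
    hence "\<not> (\<exists>j\<le>na. d (p (Suc i0)) (a j) \<le> \<delta>)" using i1 unfolding A_def by blast
    moreover obtain j' where "(j' \<le> na \<and> d (p (Suc i0)) (a j') \<le> \<delta>) \<or> (j' \<le> nb \<and> d (p (Suc i0)) (b (nb - j')) \<le> \<delta>)"
      using slimD[OF sl g ga gb i1] by blast
    ultimately have j': "j' \<le> nb" "d (p (Suc i0)) (b (nb - j')) \<le> \<delta>" by auto
    define u where "u = b (nb - j')"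
    have j'u: "d (p (Suc i0)) u \<le> \<delta>" using j'(2) u_def by simp
    have uV: "u \<in> V" using geodD(3)[OF gb j'(1)] u_def by simp
    have wu: "d w u = real j'" using geod_dist_0[OF gb j'(1)] u_def by simp
    have uy: "d u y = real nb - real j'" using geod_dist_n[OF gb j'(1)] u_def by simp
    have dwy: "d w y = nb" using geod_len[OF gb] .
    have qV: "p (Suc i0) \<in> V" using geodD(3)[OF g i1] .
    have pq: "d (p i0) (p (Suc i0)) = 1" using geodD(4)[OF g i0n i1] by simp
    have t3: "d w (p i0) \<le> d w u + d u (p (Suc i0)) + d (p (Suc i0)) (p i0)"
      using metric_onD(4)[OF m w uV pV] metric_onD(4)[OF m uV qV pV] by linarith
    have t4: "d (p i0) y \<le> d (p i0) (p (Suc i0)) + d (p (Suc i0)) u + d u y"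
      using metric_onD(4)[OF m pV qV xy(2)] metric_onD(4)[OF m qV uV xy(2)] by linarith
    have s2: "d u (p (Suc i0)) = d (p (Suc i0)) u" "d (p (Suc i0)) (p i0) = d (p i0) (p (Suc i0))"
      using metric_onD(2)[OF m] uV qV pV by metis+
    have "2 * d w (p i0) \<le> 2 * gromov_product d w x y + 4 * \<delta> + 2"
      using gp2[of d w x y] t1 t2 t3 t4 s1 s2 wa xa xp py dxy dwx dwy wu uy j(2) j'u pq by linarith
    thus ?thesis using i0n by force
  qed
qed

lemma slim_fourpt:
  assumes m: "metric_on V d" and gs: "geodesic_space V d" and sl: "slim V d \<delta>"
  shows "fourpt V d (3 * \<delta> + 1)"
  unfolding fourpt_def
proof (intro ballI)
  fix w x y z assume V: "w \<in> V" "x \<in> V" "y \<in> V" "z \<in> V"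
  obtain p3 n3 where g3: "geod V d p3 n3 x z" using gs V unfolding geodesic_space_def by blast
  obtain p1 n1 where g1: "geod V d p1 n1 x y" using gs V unfolding geodesic_space_def by blast
  obtain p2 n2 where g2: "geod V d p2 n2 y z" using gs V unfolding geodesic_space_def by blast
  have g2r: "geod V d (\<lambda>i. p2 (n2 - i)) n2 z y" using geod_rev[OF g2] .
  obtain k where k: "k \<le> n3" "d w (p3 k) \<le> gromov_product d w x z + 2 * \<delta> + 1"
    using slim_near_geod[OF m gs sl g3 V(1)] by blast
  obtain j where "(j \<le> n1 \<and> d (p3 k) (p1 j) \<le> \<delta>) \<or> (j \<le> n2 \<and> d (p3 k) (p2 j) \<le> \<delta>)"
    using slimD[OF sl g3 g1 g2 k(1)] by blast
  then obtain u where u: "d (p3 k) u \<le> \<delta>" "u \<in> V"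
    "gromov_product d w x y \<le> d w u \<or> gromov_product d w y z \<le> d w u"
    using geod_gp_le[OF m g1 _ V(1)] geod_gp_le[OF m g2 _ V(1)] geodD(3)[OF g1] geodD(3)[OF g2] by blast
  have "d w u \<le> d w (p3 k) + d (p3 k) u" using metric_onD(4)[OF m V(1) geodD(3)[OF g3 k(1)] u(2)] .
  thus "min (gromov_product d w x y) (gromov_product d w y z) - (3 * \<delta> + 1) \<le> gromov_product d w x z"
    using u k by linarith
qed



lemma log_lemma_base:
  assumes m: "metric_on V d" and N: "N \<le> 1" and qV: "\<forall>j\<le>N. q j \<in> V"
    and st: "\<forall>j<N. d (q j) (q (Suc j)) \<le> K" and K: "K \<ge> 0"
    and g: "geod V d p n (q 0) (q N)" and i: "i \<le> n"
  shows "d (p i) (q 0) \<le> K"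
proof -
  have "d (q 0) (q N) \<le> K"
  proof (cases "N = 0")
    case True thus ?thesis using metric_onD(3)[OF m] qV K by auto
  next
    case False hence "N = 1" using N by simp
    thus ?thesis using st by auto
  qed
  hence "real n \<le> K" using geod_len[OF g] by simp
  moreover have "d (p i) (q 0) = real i" using geodD(4)[OF g i, of 0] geodD(1)[OF g] by simp
  ultimately show ?thesis using i by simp
qed

lemma log_lemma:
  assumes m: "metric_on V d" and gs: "geodesic_space V d" and sl: "slim V d \<delta>" and K: "K \<ge> 0"
    and d0: "\<delta> \<ge> 0"
  shows "\<forall>q N p n. N \<le> 2^k \<longrightarrow> (\<forall>j\<le>N. q j \<in> V) \<longrightarrow> (\<forall>j<N. d (q j) (q (Suc j)) \<le> K) \<longrightarrow>
     geod V d p n (q 0) (q N) \<longrightarrow> (\<forall>i\<le>n. \<exists>j\<le>N. d (p i) (q j) \<le> \<delta> * real k + K)"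
proof (induction k)
  case 0
  show ?case
  proof (intro allI impI)
    fix q N p n i assume h: "N \<le> 2^0" "\<forall>j\<le>N. q j \<in> V" "\<forall>j<N. d (q j) (q (Suc j)) \<le> K"
      "geod V d p n (q 0) (q N)" "i \<le> n"
    have "d (p i) (q 0) \<le> K" using log_lemma_base[OF m _ h(2) h(3) K h(4) h(5)] h(1) by simp
    thus "\<exists>j\<le>N. d (p i) (q j) \<le> \<delta> * real 0 + K" by force
  qed
next
  case (Suc k)
  have IH: "\<And>q N p n. N \<le> 2^k \<Longrightarrow> (\<forall>j\<le>N. q j \<in> V) \<Longrightarrow> (\<forall>j<N. d (q j) (q (Suc j)) \<le> K) \<Longrightarrow>
     geod V d p n (q 0) (q N) \<Longrightarrow> (\<forall>i\<le>n. \<exists>j\<le>N. d (p i) (q j) \<le> \<delta> * real k + K)"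
    using Suc.IH by blast
  show ?case
  proof (intro allI impI)
    fix q N p n i assume h: "N \<le> 2^Suc k" "\<forall>j\<le>N. q j \<in> V" "\<forall>j<N. d (q j) (q (Suc j)) \<le> K"
      "geod V d p n (q 0) (q N)" "i \<le> n"
    show "\<exists>j\<le>N. d (p i) (q j) \<le> \<delta> * real (Suc k) + K"
    proof (cases "N \<le> 1")
      case True
      have "d (p i) (q 0) \<le> K" using log_lemma_base[OF m True h(2) h(3) K h(4) h(5)] .
      moreover have "\<delta> * real (Suc k) \<ge> 0" using d0 by simp
      ultimately show ?thesis by (metis add_increasing le0)
    next
      case False
      define mid where "mid = N div 2"
      have mid1: "mid \<le> 2^k" using h(1) unfolding mid_def by simp
      have mid2: "N - mid \<le> 2^k" using h(1) unfolding mid_def by simp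
      have midN: "mid \<le> N" unfolding mid_def by simp
      have qV: "q 0 \<in> V" "q mid \<in> V" "q N \<in> V" using h(2) midN by auto
      obtain g1 n1 where g1: "geod V d g1 n1 (q 0) (q mid)" using gs qV unfolding geodesic_space_def by blast
      obtain g2 n2 where g2: "geod V d g2 n2 (q mid) (q N)" using gs qV unfolding geodesic_space_def by blast
      obtain j where j: "(j \<le> n1 \<and> d (p i) (g1 j) \<le> \<delta>) \<or> (j \<le> n2 \<and> d (p i) (g2 j) \<le> \<delta>)"
        using slimD[OF sl h(4) g1 g2 h(5)] by blast
      have piV: "p i \<in> V" using geodD(3)[OF h(4) h(5)] .
      show ?thesis
      proof (cases "j \<le> n1 \<and> d (p i) (g1 j) \<le> \<delta>")
        case True
        have a1: "\<forall>j\<le>mid. q j \<in> V" using h(2) midN by auto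
        have a2: "\<forall>j<mid. d (q j) (q (Suc j)) \<le> K" using h(3) midN by auto
        have "\<exists>j'\<le>mid. d (g1 j) (q j') \<le> \<delta> * real k + K"
          using IH[OF mid1 a1 a2 g1] True by blast
        then obtain j' where j': "j' \<le> mid" "d (g1 j) (q j') \<le> \<delta> * real k + K" by blast
        have "d (p i) (q j') \<le> d (p i) (g1 j) + d (g1 j) (q j')"
          using metric_onD(4)[OF m piV geodD(3)[OF g1] ] True h(2) j' midN by auto
        hence "d (p i) (q j') \<le> \<delta> * real (Suc k) + K" using True j' by (simp add: algebra_simps)
        thus ?thesis using j' midN by (meson le_trans)
      next
        case False
        hence jj: "j \<le> n2" "d (p i) (g2 j) \<le> \<delta>" using j by auto
        define q' where "q' = (\<lambda>t. q (mid + t))"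
        have "\<exists>j'\<le>N - mid. d (g2 j) (q' j') \<le> \<delta> * real k + K"
        proof -
          have a1: "\<forall>j\<le>N - mid. q' j \<in> V" using h(2) midN unfolding q'_def by (simp add: le_diff_conv2)
          have a2: "\<forall>j<N - mid. d (q' j) (q' (Suc j)) \<le> K" using h(3) unfolding q'_def by auto
          have a3: "geod V d g2 n2 (q' 0) (q' (N - mid))" using g2 midN unfolding q'_def by simp
          show ?thesis using IH[OF mid2 a1 a2 a3] jj by blast
        qed
        then obtain j' where j': "j' \<le> N - mid" "d (g2 j) (q (mid + j')) \<le> \<delta> * real k + K"
          unfolding q'_def by blast
        have "d (p i) (q (mid + j')) \<le> d (p i) (g2 j) + d (g2 j) (q (mid + j'))"
          using metric_onD(4)[OF m piV geodD(3)[OF g2 jj(1)]] h(2) j' midN by (simp add: le_diff_conv2)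
        hence "d (p i) (q (mid + j')) \<le> \<delta> * real (Suc k) + K" using jj j' by (simp add: algebra_simps)
        moreover have "mid + j' \<le> N" using j' midN by simp
        ultimately show ?thesis by blast
      qed
    qed
  qed
qed



lemma sq_le_pow2: "k * k \<le> 2 * (2::nat) ^ k"
proof (induction k rule: nat_less_induct)
  case (1 k)
  show ?case
  proof (cases "k \<le> 4")
    case True
    hence "k = 0 \<or> k = 1 \<or> k = 2 \<or> k = 3 \<or> k = 4" by auto
    thus ?thesis by auto
  next
    case False
    then obtain j where j: "k = Suc j" "j \<ge> 4" by (metis Suc_le_D not_less_eq_eq)
    have "j * j \<le> 2 * 2 ^ j" using 1 j by auto
    moreover have "4 * j \<le> j * j" using j(2) by (rule mult_right_mono) simp
    moreover have "Suc j * Suc j = j * j + 2 * j + 1" by (simp add: algebra_simps)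
    ultimately have "Suc j * Suc j \<le> 2 * (j * j)" using j(2) by linarith
    thus ?thesis using \<open>j * j \<le> 2 * 2 ^ j\<close> j(1) by simp
  qed
qed

lemma exp_beats_lin: "\<exists>K0::nat. \<forall>k. real (2^k) < a + b * real k \<longrightarrow> k \<le> K0"
proof -
  define K0 where "K0 = nat \<lceil>2 * \<bar>b\<bar> + 2 * \<bar>a\<bar> + 4\<rceil>"
  have "k \<le> K0" if h: "real (2^k) < a + b * real k" for k
  proof (rule ccontr)
    assume "\<not> k \<le> K0"
    hence kM: "real k \<ge> 2 * \<bar>b\<bar> + 2 * \<bar>a\<bar> + 4" unfolding K0_def by linarith
    have k1: "real k \<ge> 1" using kM by linarith
    have "real (k * k) \<le> real (2 * 2 ^ k)" using sq_le_pow2[of k] by linarith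
    hence sq: "real k * real k \<le> 2 * real (2 ^ k)" by simp
    have "real k * (2 * \<bar>b\<bar> + 2 * \<bar>a\<bar> + 4) \<le> real k * real k" using kM by (simp add: mult_left_mono)
    hence e: "2 * (\<bar>b\<bar> * real k) + 2 * (\<bar>a\<bar> * real k) + 4 * real k \<le> real k * real k"
      by (simp add: algebra_simps)
    have "b * real k \<le> \<bar>b\<bar> * real k" by (simp add: mult_right_mono)
    moreover have "\<bar>a\<bar> * 1 \<le> \<bar>a\<bar> * real k" using k1 by (intro mult_left_mono) auto
    ultimately show False using e sq h by linarith
  qed
  thus ?thesis by blast
qed

lemma log_bound_real:
  assumes "\<alpha> \<ge> 0" "B \<ge> 0" "A \<ge> 0"
  shows "\<exists>H. \<forall>D\<ge>0. (\<forall>k::nat. \<alpha> * D + \<beta> \<le> 2^k \<longrightarrow> D \<le> A + B * real k) \<longrightarrow> D \<le> H"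
proof -
  obtain K0 where K0: "\<And>k. real (2^k) < 2 * (\<alpha> * A + \<beta>) + 2 * \<alpha> * B * real k \<Longrightarrow> k \<le> K0"
    using exp_beats_lin[of "2 * (\<alpha> * A + \<beta>)" "2 * \<alpha> * B"] by blast
  have "D \<le> A + B * real K0" if D: "D \<ge> 0" and P: "\<forall>k::nat. \<alpha> * D + \<beta> \<le> 2^k \<longrightarrow> D \<le> A + B * real k" for D
  proof -
    obtain k0 where "\<alpha> * D + \<beta> < 2 ^ k0" using real_arch_pow[of 2 "\<alpha> * D + \<beta>"] by auto
    hence ex: "\<exists>k. \<alpha> * D + \<beta> \<le> 2 ^ k" by (meson less_eq_real_def)
    define k where "k = (LEAST k. \<alpha> * D + \<beta> \<le> 2 ^ k)"
    have k: "\<alpha> * D + \<beta> \<le> 2 ^ k" unfolding k_def using LeastI_ex[OF ex] .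
    have Dk: "D \<le> A + B * real k" using P k by blast
    show ?thesis
    proof (cases k)
      case 0
      have "B * real K0 \<ge> 0" using assms by simp
      thus ?thesis using Dk 0 by simp
    next
      case (Suc k')
      have "\<not> (\<alpha> * D + \<beta> \<le> 2 ^ k')" using not_less_Least[of k' "\<lambda>k. \<alpha> * D + \<beta> \<le> 2 ^ k"] Suc k_def by simp
      hence "2 ^ k < 2 * (\<alpha> * D + \<beta>)" using Suc by simp
      moreover have "\<alpha> * D \<le> \<alpha> * (A + B * real k)" using Dk assms(1) by (rule mult_left_mono)
      ultimately have "real (2 ^ k) < 2 * (\<alpha> * A + \<beta>) + 2 * \<alpha> * B * real k" by (simp add: algebra_simps)
      hence "k \<le> K0" using K0 by blast
      hence "B * real k \<le> B * real K0" using assms(2) by (simp add: mult_left_mono)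
      thus ?thesis using Dk by linarith
    qed
  qed
  thus ?thesis by blast
qed

definition qgeod :: "'v set \<Rightarrow> ('v \<Rightarrow> 'v \<Rightarrow> real) \<Rightarrow> real \<Rightarrow> real \<Rightarrow> (nat \<Rightarrow> 'v) \<Rightarrow> nat \<Rightarrow> bool" where
  "qgeod V d lam c q N \<longleftrightarrow> (\<forall>j\<le>N. q j \<in> V) \<and> (\<forall>i\<le>N. \<forall>j\<le>N. d (q i) (q j) \<le> lam * \<bar>real i - real j\<bar> + c
      \<and> \<bar>real i - real j\<bar> \<le> lam * (d (q i) (q j) + c))"

lemma tri3: "metric_on V d \<Longrightarrow> a \<in> V \<Longrightarrow> b \<in> V \<Longrightarrow> c \<in> V \<Longrightarrow> e \<in> V \<Longrightarrow> d a e \<le> d a b + d b c + d c e"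
  by (smt (verit) metric_onD(4))

lemma log_seg:
  assumes m: "metric_on V d" and gs: "geodesic_space V d" and sl: "slim V d \<delta>" and K: "K \<ge> 0"
    and d0: "\<delta> \<ge> 0" and qV: "\<forall>j\<le>N. q j \<in> V" and st: "\<forall>j<N. d (q j) (q (Suc j)) \<le> K"
    and ja: "ja \<le> N" and jb: "jb \<le> N" and len: "\<bar>real ja - real jb\<bar> \<le> 2^k"
    and g: "geod V d g ng (q ja) (q jb)" and t: "t \<le> ng"
  shows "\<exists>j\<le>N. d (g t) (q j) \<le> \<delta> * real k + K"
proof -
  have LL: "\<And>q N p n. N \<le> 2^k \<Longrightarrow> (\<forall>j\<le>N. q j \<in> V) \<Longrightarrow> (\<forall>j<N. d (q j) (q (Suc j)) \<le> K) \<Longrightarrow>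
     geod V d p n (q 0) (q N) \<Longrightarrow> (\<forall>i\<le>n. \<exists>j\<le>N. d (p i) (q j) \<le> \<delta> * real k + K)"
    using log_lemma[OF m gs sl K d0, of k] by blast
  show ?thesis
  proof (cases "ja \<le> jb")
    case True
    define q' where "q' = (\<lambda>s. q (ja + s))"
    have "real (jb - ja) \<le> real (2^k)" using len True by (simp add: of_nat_diff)
    hence a0: "jb - ja \<le> 2^k" by (simp only: of_nat_le_iff)
    have a1: "\<forall>j\<le>jb - ja. q' j \<in> V" using qV jb True unfolding q'_def by auto
    have a2: "\<forall>j<jb - ja. d (q' j) (q' (Suc j)) \<le> K" using st jb True unfolding q'_def by auto
    have a3: "geod V d g ng (q' 0) (q' (jb - ja))" using g True unfolding q'_def by simp
    obtain j where "j \<le> jb - ja" "d (g t) (q' j) \<le> \<delta> * real k + K" using LL[OF a0 a1 a2 a3] t by blast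
    thus ?thesis unfolding q'_def using jb True by (intro exI[of _ "ja + j"]) auto
  next
    case False
    define q' where "q' = (\<lambda>s. q (ja - s))"
    have "real (ja - jb) \<le> real (2^k)" using len False by (simp add: of_nat_diff)
    hence a0: "ja - jb \<le> 2^k" by (simp only: of_nat_le_iff)
    have a1: "\<forall>j\<le>ja - jb. q' j \<in> V" using qV ja unfolding q'_def by auto
    have a2: "\<forall>j<ja - jb. d (q' j) (q' (Suc j)) \<le> K"
    proof (intro allI impI)
      fix j assume j: "j < ja - jb"
      define u where "u = ja - Suc j"
      have u: "ja - j = Suc u" "u < N" using j ja unfolding u_def by auto
      have "d (q u) (q (Suc u)) \<le> K" using st u(2) by blast
      moreover have "d (q (Suc u)) (q u) = d (q u) (q (Suc u))" using metric_onD(2)[OF m] qV u(2) by auto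
      ultimately show "d (q' j) (q' (Suc j)) \<le> K" unfolding q'_def using u(1) u_def by simp
    qed
    have a3: "geod V d g ng (q' 0) (q' (ja - jb))" using g False unfolding q'_def by simp
    obtain j where "j \<le> ja - jb" "d (g t) (q' j) \<le> \<delta> * real k + K" using LL[OF a0 a1 a2 a3] t by blast
    thus ?thesis unfolding q'_def using ja by (intro exI[of _ "ja - j"]) auto
  qed
qed



lemma morse1:
  assumes m: "metric_on V d" and gs: "geodesic_space V d" and sl0: "slim V d \<delta>0"
    and lam: "lam \<ge> 1" and c: "c \<ge> 0"
  shows "\<exists>H\<ge>0. \<forall>q N p n. qgeod V d lam c q N \<longrightarrow> geod V d p n (q 0) (q N) \<longrightarrow>
            (\<forall>i\<le>n. \<exists>j\<le>N. d (p i) (q j) \<le> H)"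
proof -
  define \<delta> where "\<delta> = max \<delta>0 0"
  have sl: "slim V d \<delta>" using slim_mono[OF sl0] \<delta>_def by simp
  have d0: "\<delta> \<ge> 0" unfolding \<delta>_def by simp
  define K where "K = lam + c"
  have K0: "K \<ge> 0" using lam c K_def by simp
  define \<alpha> where "\<alpha> = 6 * lam"
  define \<beta> where "\<beta> = lam * (2 + c)"
  define A where "A = 2 * \<delta> + K"
  define B where "B = \<delta>"
  obtain H0 where H0: "\<And>D. D \<ge> 0 \<Longrightarrow> (\<forall>k::nat. \<alpha> * D + \<beta> \<le> 2^k \<longrightarrow> D \<le> A + B * real k) \<Longrightarrow> D \<le> H0"
    using log_bound_real[of \<alpha> B A \<beta>] lam d0 K0 unfolding \<alpha>_def A_def B_def by auto
  have main: "\<forall>i\<le>n. \<exists>j\<le>N. d (p i) (q j) \<le> max H0 0"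
    if qg: "qgeod V d lam c q N" and g: "geod V d p n (q 0) (q N)" for q N p n
  proof -
    have qV: "\<And>j. j \<le> N \<Longrightarrow> q j \<in> V" using qg unfolding qgeod_def by blast
    have qd: "\<And>i j. i \<le> N \<Longrightarrow> j \<le> N \<Longrightarrow> d (q i) (q j) \<le> lam * \<bar>real i - real j\<bar> + c
      \<and> \<bar>real i - real j\<bar> \<le> lam * (d (q i) (q j) + c)" using qg unfolding qgeod_def by blast
    have st: "\<forall>j<N. d (q j) (q (Suc j)) \<le> K"
    proof (intro allI impI)
      fix j assume "j < N"
      hence "d (q j) (q (Suc j)) \<le> lam * \<bar>real j - real (Suc j)\<bar> + c" using qd[of j "Suc j"] by simp
      thus "d (q j) (q (Suc j)) \<le> K" unfolding K_def by simp
    qed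
    have pV: "\<And>i. i \<le> n \<Longrightarrow> p i \<in> V" using geodD(3)[OF g] .
    define dQ where "dQ = (\<lambda>x. Min ((\<lambda>j. d x (q j)) ` {..N}))"
    have dQ_le: "\<And>x j. j \<le> N \<Longrightarrow> dQ x \<le> d x (q j)" unfolding dQ_def by (intro Min_le) auto
    have dQ_ex: "\<And>x. \<exists>j\<le>N. dQ x = d x (q j)"
    proof -
      fix x
      have "Min ((\<lambda>j. d x (q j)) ` {..N}) \<in> (\<lambda>j. d x (q j)) ` {..N}" by (intro Min_in) auto
      then obtain j where "j \<in> {..N}" "Min ((\<lambda>j. d x (q j)) ` {..N}) = d x (q j)" by blast
      moreover have "j \<le> N" using \<open>j \<in> {..N}\<close> by simp
      ultimately show "\<exists>j\<le>N. dQ x = d x (q j)" unfolding dQ_def by blast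
    qed
    have dQ_nn: "\<And>x. x \<in> V \<Longrightarrow> dQ x \<ge> 0" using dQ_ex metric_onD(1)[OF m] qV by metis
    define D where "D = Max ((\<lambda>i. dQ (p i)) ` {..n})"
    have D_ge: "\<And>i. i \<le> n \<Longrightarrow> dQ (p i) \<le> D" unfolding D_def by (intro Max_ge) auto
    have D_ex: "\<exists>i0\<le>n. D = dQ (p i0)"
    proof -
      have "Max ((\<lambda>i. dQ (p i)) ` {..n}) \<in> (\<lambda>i. dQ (p i)) ` {..n}" by (intro Max_in) auto
      then obtain i where "i \<in> {..n}" "Max ((\<lambda>i. dQ (p i)) ` {..n}) = dQ (p i)" by blast
      moreover have "i \<le> n" using \<open>i \<in> {..n}\<close> by simp
      ultimately show ?thesis unfolding D_def by blast
    qed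
    have D0: "D \<ge> 0" using D_ge[of 0] dQ_nn[OF pV[of 0]] by simp
    have claim: "\<forall>k::nat. \<alpha> * D + \<beta> \<le> 2^k \<longrightarrow> D \<le> A + B * real k"
    proof (intro allI impI)
      fix k :: nat assume hk: "\<alpha> * D + \<beta> \<le> 2^k"
      obtain i0 where i0: "i0 \<le> n" "D = dQ (p i0)" using D_ex by blast
      define r where "r = nat \<lceil>2 * D\<rceil>"
      have r: "2 * D \<le> real r" "real r \<le> 2 * D + 1" unfolding r_def using D0 by linarith+
      define ia where "ia = i0 - r"
      define ib where "ib = min n (i0 + r)"
      have iab: "ia \<le> i0" "i0 \<le> ib" "ib \<le> n" "ib - ia \<le> 2 * r" using i0 unfolding ia_def ib_def by auto
      define y where "y = p ia"
      define z where "z = p ib"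
      have yV: "y \<in> V" using pV iab unfolding y_def by simp
      have zV: "z \<in> V" using pV iab unfolding z_def by simp
      have p0V: "p i0 \<in> V" using pV i0 by simp
      obtain ja where ja: "ja \<le> N" "dQ y = d y (q ja)" using dQ_ex by blast
      obtain jb where jb: "jb \<le> N" "dQ z = d z (q jb)" using dQ_ex by blast
      have qaV: "q ja \<in> V" using qV ja by simp
      have qbV: "q jb \<in> V" using qV jb by simp
      have dyq: "d y (q ja) \<le> D" using ja D_ge[of ia] iab i0 unfolding y_def by simp
      have dzq: "d z (q jb) \<le> D" using jb D_ge[of ib] iab unfolding z_def by simp
      have dyz: "d y z = real (ib - ia)" using geodD(4)[OF g, of ia ib] iab unfolding y_def z_def by (simp add: of_nat_diff)
      have Cy: "D \<le> d (p i0) u" if u: "u \<in> V" "d y u \<le> d y (q ja)" for u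
      proof (cases "r \<le> i0")
        case True
        have "d (p i0) y = real r" using geodD(4)[OF g i0(1), of ia] iab True unfolding y_def ia_def by (simp add: of_nat_diff)
        moreover have "d (p i0) y \<le> d (p i0) u + d u y" using metric_onD(4)[OF m p0V u(1) yV] .
        moreover have "d u y = d y u" using metric_onD(2)[OF m u(1) yV] .
        ultimately show ?thesis using r u(2) dyq by linarith
      next
        case False
        hence "y = q 0" unfolding y_def ia_def using geodD(1)[OF g] by simp
        hence "d y (q ja) \<le> 0" using ja dQ_le[of 0 y] metric_onD(3)[OF m yV] by simp
        hence "d y u = 0" using u metric_onD(1)[OF m yV u(1)] by simp
        moreover have "D \<le> d (p i0) y" using i0 dQ_le[of 0 "p i0"] \<open>y = q 0\<close> by simp
        moreover have "d (p i0) y \<le> d (p i0) u + d u y" using metric_onD(4)[OF m p0V u(1) yV] .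
        moreover have "d u y = d y u" using metric_onD(2)[OF m u(1) yV] .
        ultimately show ?thesis by linarith
      qed
      have Cz: "D \<le> d (p i0) u" if u: "u \<in> V" "d u z \<le> d (q jb) z" for u
      proof (cases "i0 + r \<le> n")
        case True
        have "d (p i0) z = real r" using geodD(4)[OF g i0(1), of ib] iab True unfolding z_def ib_def by simp
        moreover have "d (p i0) z \<le> d (p i0) u + d u z" using metric_onD(4)[OF m p0V u(1) zV] .
        moreover have "d (q jb) z = d z (q jb)" using metric_onD(2)[OF m qbV zV] .
        ultimately show ?thesis using r u(2) dzq by linarith
      next
        case False
        hence "z = q N" unfolding z_def ib_def using geodD(2)[OF g] by simp
        hence "d z (q jb) \<le> 0" using jb dQ_le[of N z] metric_onD(3)[OF m zV] by simp
        moreover have "d (q jb) z = d z (q jb)" using metric_onD(2)[OF m qbV zV] .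
        ultimately have "d u z = 0" using u metric_onD(1)[OF m u(1) zV] by simp
        moreover have "D \<le> d (p i0) z" using i0 dQ_le[of N "p i0"] \<open>z = q N\<close> by simp
        moreover have "d (p i0) z \<le> d (p i0) u + d u z" using metric_onD(4)[OF m p0V u(1) zV] .
        ultimately show ?thesis by linarith
      qed
      have gsub: "geod V d (\<lambda>t. p (ia + t)) (ib - ia) y z"
        using geod_sub[OF g, of ia ib] iab unfolding y_def z_def by simp
      have ii: "i0 - ia \<le> ib - ia" "p (ia + (i0 - ia)) = p i0" using iab by auto
      obtain c1 nc1 where c1: "geod V d c1 nc1 y (q ja)" using gs yV qaV unfolding geodesic_space_def by blast
      obtain h nh where h: "geod V d h nh (q ja) z" using gs zV qaV unfolding geodesic_space_def by blast
      obtain t where t: "(t \<le> nc1 \<and> d (p i0) (c1 t) \<le> \<delta>) \<or> (t \<le> nh \<and> d (p i0) (h t) \<le> \<delta>)"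
        using slimD[OF sl gsub c1 h ii(1)] ii(2) by auto
      have Bk: "B * real k \<ge> 0" using d0 B_def by simp
      show "D \<le> A + B * real k"
      proof (cases "t \<le> nc1 \<and> d (p i0) (c1 t) \<le> \<delta>")
        case True
        have "d y (c1 t) = real t" using geod_dist_0[OF c1] True by simp
        moreover have "real t \<le> d y (q ja)" using geod_len[OF c1] True by simp
        ultimately have "D \<le> d (p i0) (c1 t)" using Cy[of "c1 t"] geodD(3)[OF c1] True by simp
        thus ?thesis using True Bk d0 K0 unfolding A_def by linarith
      next
        case False
        hence t: "t \<le> nh" "d (p i0) (h t) \<le> \<delta>" using t by auto
        define u where "u = h t"
        have uV: "u \<in> V" using geodD(3)[OF h t(1)] u_def by simp
        obtain g0 ng where g0: "geod V d g0 ng (q ja) (q jb)" using gs qaV qbV unfolding geodesic_space_def by blast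
        obtain c2 nc2 where c2: "geod V d c2 nc2 (q jb) z" using gs zV qbV unfolding geodesic_space_def by blast
        obtain t' where t': "(t' \<le> ng \<and> d u (g0 t') \<le> \<delta>) \<or> (t' \<le> nc2 \<and> d u (c2 t') \<le> \<delta>)"
          using slimD[OF sl h g0 c2 t(1)] u_def by auto
        show ?thesis
        proof (cases "t' \<le> ng \<and> d u (g0 t') \<le> \<delta>")
          case False
          hence t'': "t' \<le> nc2" "d u (c2 t') \<le> \<delta>" using t' by auto
          define v where "v = c2 t'"
          have vV: "v \<in> V" using geodD(3)[OF c2 t''(1)] v_def by simp
          have "d v z = real nc2 - real t'" using geod_dist_n[OF c2 t''(1)] v_def by simp
          moreover have "d (q jb) z = real nc2" using geod_len[OF c2] .
          ultimately have "D \<le> d (p i0) v" using Cz[OF vV] by simp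
          moreover have "d (p i0) v \<le> d (p i0) u + d u v" using metric_onD(4)[OF m p0V uV vV] .
          ultimately show ?thesis using t(2) t''(2) Bk d0 K0 unfolding A_def u_def v_def by linarith
        next
          case True
          define v where "v = g0 t'"
          have vV: "v \<in> V" using geodD(3)[OF g0] True v_def by simp
          have "d (q ja) (q jb) \<le> d (q ja) y + d y z + d z (q jb)" using tri3[OF m qaV yV zV qbV] .
          moreover have "d (q ja) y = d y (q ja)" using metric_onD(2)[OF m qaV yV] .
          moreover have "real (ib - ia) \<le> 2 * real r" using iab(4) by linarith
          ultimately have "d (q ja) (q jb) \<le> 6 * D + 2" using dyq dzq dyz r by linarith
          hence "d (q ja) (q jb) + c \<le> 6 * D + 2 + c" by simp
          hence "lam * (d (q ja) (q jb) + c) \<le> lam * (6 * D + 2 + c)" using lam by (intro mult_left_mono) auto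
          moreover have e1: "\<bar>real ja - real jb\<bar> \<le> lam * (d (q ja) (q jb) + c)" using qd[OF ja(1) jb(1)] by blast
          moreover have e2: "lam * (6 * D + 2 + c) = \<alpha> * D + \<beta>" unfolding \<alpha>_def \<beta>_def by (simp add: algebra_simps)
          ultimately have len: "\<bar>real ja - real jb\<bar> \<le> 2^k" using hk by linarith
          have qV': "\<forall>j\<le>N. q j \<in> V" using qV by blast
          have tng: "t' \<le> ng" using True by blast
          obtain j where j: "j \<le> N" "d (g0 t') (q j) \<le> \<delta> * real k + K"
            using log_seg[OF m gs sl K0 d0 qV' st ja(1) jb(1) len g0 tng] by blast
          have jv: "d v (q j) \<le> \<delta> * real k + K" using j(2) v_def by simp
          have qjV: "q j \<in> V" using qV j(1) by simp
          have "D \<le> d (p i0) (q j)" using i0 dQ_le[OF j(1)] by simp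
          moreover have "d (p i0) (q j) \<le> d (p i0) u + d u v + d v (q j)" using tri3[OF m p0V uV vV qjV] .
          moreover have "d u v \<le> \<delta>" using True u_def v_def by simp
          moreover have "d (p i0) u \<le> \<delta>" using t(2) u_def by simp
          ultimately show ?thesis using jv unfolding A_def B_def by linarith
        qed
      qed
    qed
    have "D \<le> H0" using H0[OF D0 claim] .
    show ?thesis
    proof (intro allI impI)
      fix i assume "i \<le> n"
      obtain j where "j \<le> N" "dQ (p i) = d (p i) (q j)" using dQ_ex by blast
      thus "\<exists>j\<le>N. d (p i) (q j) \<le> max H0 0" using D_ge[OF \<open>i \<le> n\<close>] \<open>D \<le> H0\<close> by force
    qed
  qed
  show ?thesis by (intro exI[of _ "max H0 0"]) (use main in auto)
qed



lemma morse2: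
  assumes m: "metric_on V d" and gs: "geodesic_space V d" and sl: "slim V d \<delta>"
    and lam: "lam \<ge> 1" and c: "c \<ge> 0"
  shows "\<exists>H'. \<forall>q N p n. qgeod V d lam c q N \<longrightarrow> geod V d p n (q 0) (q N) \<longrightarrow>
            (\<forall>j\<le>N. \<exists>i\<le>n. d (q j) (p i) \<le> H')"
proof -
  obtain H where H0: "H \<ge> 0" and H: "\<And>q N p n. qgeod V d lam c q N \<Longrightarrow> geod V d p n (q 0) (q N) \<Longrightarrow>
            (\<forall>i\<le>n. \<exists>j\<le>N. d (p i) (q j) \<le> H)"
    using morse1[OF m gs sl lam c] by blast
  define H' where "H' = lam * lam * (2 * H + 1 + c) + c + H"
  have main: "\<exists>i\<le>n. d (q j0) (p i) \<le> H'"
    if qg: "qgeod V d lam c q N" and g: "geod V d p n (q 0) (q N)" and j0: "j0 \<le> N" for q N p n j0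
  proof -
    have qV: "\<And>j. j \<le> N \<Longrightarrow> q j \<in> V" using qg unfolding qgeod_def by blast
    have qd: "\<And>i j. i \<le> N \<Longrightarrow> j \<le> N \<Longrightarrow> d (q i) (q j) \<le> lam * \<bar>real i - real j\<bar> + c
      \<and> \<bar>real i - real j\<bar> \<le> lam * (d (q i) (q j) + c)" using qg unfolding qgeod_def by blast
    have pV: "\<And>i. i \<le> n \<Longrightarrow> p i \<in> V" using geodD(3)[OF g] .
    have M: "\<And>i. i \<le> n \<Longrightarrow> \<exists>j\<le>N. d (p i) (q j) \<le> H" using H[OF qg g] by blast
    define Aset where "Aset = {i. i \<le> n \<and> (\<exists>j\<le>j0. d (p i) (q j) \<le> H)}"
    have A0: "0 \<in> Aset" unfolding Aset_def using geodD(1)[OF g] metric_onD(3)[OF m qV[of 0]] H0 by auto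
    have fA: "finite Aset" unfolding Aset_def by simp
    have i1A: "Max Aset \<in> Aset" using Max_in[OF fA] A0 by blast
    have i1max: "\<And>i. i \<in> Aset \<Longrightarrow> i \<le> Max Aset" using Max_ge[OF fA] by blast
    define i1 where "i1 = Max Aset"
    obtain j1 where j1: "j1 \<le> j0" "d (p i1) (q j1) \<le> H" and i1n: "i1 \<le> n"
      using i1A unfolding Aset_def i1_def by blast
    have j1N: "j1 \<le> N" using j1 j0 by simp
    have lamsq: "lam * lam \<ge> 0" using lam by simp
    show ?thesis
    proof (cases "i1 = n")
      case True
      have "p n = q N" using geodD(2)[OF g] .
      hence "d (q j1) (q N) \<le> H" using j1 True metric_onD(2)[OF m qV[OF j1N] qV[of N]] by simp
      hence "lam * (d (q j1) (q N) + c) \<le> lam * (H + c)" using lam by (intro mult_left_mono) auto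
      hence "\<bar>real j1 - real N\<bar> \<le> lam * (H + c)" using qd[OF j1N, of N] by simp
      hence "real N - real j0 \<le> lam * (H + c)" using j1 j0 by simp
      hence "lam * (real N - real j0) \<le> lam * (lam * (H + c))" using lam by (intro mult_left_mono) auto
      moreover have "d (q j0) (q N) \<le> lam * \<bar>real j0 - real N\<bar> + c" using qd[OF j0, of N] by simp
      moreover have "\<bar>real j0 - real N\<bar> = real N - real j0" using j0 by simp
      moreover have "lam * lam * (H + c) \<le> lam * lam * (2 * H + 1 + c)" using lamsq H0 by (intro mult_left_mono) auto
      note F = calculation this
      have "d (q j0) (q N) \<le> H'"
      proof -
        have "d (q j0) (q N) \<le> lam * (real N - real j0) + c" using F(2,3) by simp
        also have "\<dots> \<le> lam * (lam * (H + c)) + c" using F(1) by simp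
        also have "\<dots> = lam * lam * (H + c) + c" by (simp add: mult.assoc)
        also have "\<dots> \<le> lam * lam * (2 * H + 1 + c) + c" using F(4) by simp
        also have "\<dots> \<le> H'" unfolding H'_def using H0 by simp
        finally show ?thesis .
      qed
      thus ?thesis using \<open>p n = q N\<close> by (intro exI[of _ n]) simp
    next
      case False
      hence i1': "Suc i1 \<le> n" using i1n by simp
      hence "Suc i1 \<notin> Aset" using i1max i1_def by fastforce
      hence nA: "\<not> (\<exists>j\<le>j0. d (p (Suc i1)) (q j) \<le> H)" using i1' unfolding Aset_def by blast
      obtain j2 where j2: "j2 \<le> N" "d (p (Suc i1)) (q j2) \<le> H" using M[OF i1'] by blast
      have j02: "j0 < j2" using nA j2 by (meson not_le)
      have "d (q j1) (q j2) \<le> d (q j1) (p i1) + d (p i1) (p (Suc i1)) + d (p (Suc i1)) (q j2)"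
        using tri3[OF m qV[OF j1N] pV[OF i1n] pV[OF i1'] qV[OF j2(1)]] .
      moreover have "d (q j1) (p i1) = d (p i1) (q j1)" using metric_onD(2)[OF m qV[OF j1N] pV[OF i1n]] .
      moreover have "d (p i1) (p (Suc i1)) = 1" using geodD(4)[OF g i1n i1'] by simp
      ultimately have "d (q j1) (q j2) \<le> 2 * H + 1" using j1 j2 by linarith
      hence "lam * (d (q j1) (q j2) + c) \<le> lam * (2 * H + 1 + c)" using lam by (intro mult_left_mono) auto
      hence "\<bar>real j1 - real j2\<bar> \<le> lam * (2 * H + 1 + c)" using qd[OF j1N j2(1)] by simp
      hence "real j0 - real j1 \<le> lam * (2 * H + 1 + c)" using j1 j02 by simp
      hence "lam * (real j0 - real j1) \<le> lam * (lam * (2 * H + 1 + c))" using lam by (intro mult_left_mono) auto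
      moreover have "d (q j0) (q j1) \<le> lam * \<bar>real j0 - real j1\<bar> + c" using qd[OF j0 j1N] by simp
      moreover have "\<bar>real j0 - real j1\<bar> = real j0 - real j1" using j1 by simp
      moreover have "d (q j0) (p i1) \<le> d (q j0) (q j1) + d (q j1) (p i1)"
        using metric_onD(4)[OF m qV[OF j0] qV[OF j1N] pV[OF i1n]] .
      moreover have "d (q j1) (p i1) = d (p i1) (q j1)" using metric_onD(2)[OF m qV[OF j1N] pV[OF i1n]] .
      note F = calculation this
      have "d (q j0) (q j1) \<le> lam * lam * (2 * H + 1 + c) + c"
      proof -
        have "d (q j0) (q j1) \<le> lam * (real j0 - real j1) + c" using F(2,3) by simp
        also have "\<dots> \<le> lam * (lam * (2 * H + 1 + c)) + c" using F(1) by simp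
        also have "\<dots> = lam * lam * (2 * H + 1 + c) + c" by (simp add: mult.assoc)
        finally show ?thesis .
      qed
      hence "d (q j0) (p i1) \<le> lam * lam * (2 * H + 1 + c) + c + H" using F(4,5) j1 by linarith
      hence "d (q j0) (p i1) \<le> H'" unfolding H'_def by simp
      thus ?thesis using i1n by blast
    qed
  qed
  show ?thesis using main by blast
qed

theorem qi_hyperbolic:
  assumes gX: "geodesic_space VX dX" and gY: "geodesic_space VY dY" and fY: "fourpt VY dY \<delta>"
    and fX: "\<And>x. x \<in> VX \<Longrightarrow> f x \<in> VY" and lam: "lam \<ge> 1" and c: "c \<ge> 0"
    and qi: "\<And>a b. a \<in> VX \<Longrightarrow> b \<in> VX \<Longrightarrow> dY (f a) (f b) \<le> lam * dX a b + c \<and> dX a b \<le> lam * (dY (f a) (f b) + c)"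
  shows "\<exists>\<delta>'. fourpt VX dX \<delta>'"
proof -
  have mX: "metric_on VX dX" and mY: "metric_on VY dY" using gX gY unfolding geodesic_space_def by auto
  have slY: "slim VY dY (3 * \<delta> + 1)" using fourpt_slim[OF mY fY] .
  obtain H where H: "\<And>q N p n. qgeod VY dY lam c q N \<Longrightarrow> geod VY dY p n (q 0) (q N) \<Longrightarrow>
            (\<forall>i\<le>n. \<exists>j\<le>N. dY (p i) (q j) \<le> H)"
    using morse1[OF mY gY slY lam c] by blast
  obtain H' where H': "\<And>q N p n. qgeod VY dY lam c q N \<Longrightarrow> geod VY dY p n (q 0) (q N) \<Longrightarrow>
            (\<forall>j\<le>N. \<exists>i\<le>n. dY (q j) (p i) \<le> H')"
    using morse2[OF mY gY slY lam c] by blast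
  define \<Delta> where "\<Delta> = lam * (H' + (3 * \<delta> + 1) + H + c)"
  have qg: "qgeod VY dY lam c (\<lambda>i. f (p i)) n" if g: "geod VX dX p n x y" for p n x y
    unfolding qgeod_def
  proof (intro conjI allI impI)
    fix j assume "j \<le> n" thus "f (p j) \<in> VY" using fX geodD(3)[OF g] by blast
  next
    fix i j assume ij: "i \<le> n" "j \<le> n"
    have e: "dX (p i) (p j) = \<bar>real i - real j\<bar>" using geodD(4)[OF g ij] .
    show "dY (f (p i)) (f (p j)) \<le> lam * \<bar>real i - real j\<bar> + c" using qi[OF geodD(3)[OF g ij(1)] geodD(3)[OF g ij(2)]] e by simp
    show "\<bar>real i - real j\<bar> \<le> lam * (dY (f (p i)) (f (p j)) + c)" using qi[OF geodD(3)[OF g ij(1)] geodD(3)[OF g ij(2)]] e by simp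
  qed
  have "slim VX dX \<Delta>"
    unfolding slim_def
  proof (intro allI impI)
    fix p n x y a na z b nb i
    assume g: "geod VX dX p n x y" and ga: "geod VX dX a na x z" and gb: "geod VX dX b nb z y" and i: "i \<le> n"
    have V: "x \<in> VX" "y \<in> VX" "z \<in> VX" using geod_ends[OF g] geod_ends[OF ga] by auto
    obtain gp ngp where gp: "geod VY dY gp ngp (f x) (f y)" using gY fX V unfolding geodesic_space_def by blast
    obtain gpa nga where gpa: "geod VY dY gpa nga (f x) (f z)" using gY fX V unfolding geodesic_space_def by blast
    obtain gpb ngb where gpb: "geod VY dY gpb ngb (f z) (f y)" using gY fX V unfolding geodesic_space_def by blast
    have e1: "(\<lambda>i. f (p i)) 0 = f x" "(\<lambda>i. f (p i)) n = f y" using geodD(1,2)[OF g] by auto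
    have e2: "(\<lambda>i. f (a i)) 0 = f x" "(\<lambda>i. f (a i)) na = f z" using geodD(1,2)[OF ga] by auto
    have e3: "(\<lambda>i. f (b i)) 0 = f z" "(\<lambda>i. f (b i)) nb = f y" using geodD(1,2)[OF gb] by auto
    obtain i' where i': "i' \<le> ngp" "dY (f (p i)) (gp i') \<le> H'"
      using H'[OF qg[OF g]] gp e1 i by fastforce
    obtain j where j: "(j \<le> nga \<and> dY (gp i') (gpa j) \<le> 3 * \<delta> + 1) \<or> (j \<le> ngb \<and> dY (gp i') (gpb j) \<le> 3 * \<delta> + 1)"
      using slimD[OF slY gp gpa gpb i'(1)] by blast
    have fpV: "f (p i) \<in> VY" using fX geodD(3)[OF g i] by blast
    have gpV: "gp i' \<in> VY" using geodD(3)[OF gp i'(1)] .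
    show "\<exists>j. (j \<le> na \<and> dX (p i) (a j) \<le> \<Delta>) \<or> (j \<le> nb \<and> dX (p i) (b j) \<le> \<Delta>)"
    proof (cases "j \<le> nga \<and> dY (gp i') (gpa j) \<le> 3 * \<delta> + 1")
      case True
      obtain j' where j': "j' \<le> na" "dY (gpa j) (f (a j')) \<le> H"
        using H[OF qg[OF ga]] gpa e2 True by fastforce
      have uV: "gpa j \<in> VY" using geodD(3)[OF gpa] True by blast
      have aV: "a j' \<in> VX" using geodD(3)[OF ga j'(1)] .
      have "dY (f (p i)) (f (a j')) \<le> dY (f (p i)) (gp i') + dY (gp i') (gpa j) + dY (gpa j) (f (a j'))"
        using tri3[OF mY fpV gpV uV fX[OF aV]] .
      hence "dY (f (p i)) (f (a j')) + c \<le> H' + (3 * \<delta> + 1) + H + c" using i' True j' by linarith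
      hence "lam * (dY (f (p i)) (f (a j')) + c) \<le> \<Delta>" unfolding \<Delta>_def using lam by (intro mult_left_mono) auto
      hence "dX (p i) (a j') \<le> \<Delta>" using qi[OF geodD(3)[OF g i] aV] by linarith
      thus ?thesis using j' by blast
    next
      case False
      hence jb: "j \<le> ngb" "dY (gp i') (gpb j) \<le> 3 * \<delta> + 1" using j by auto
      obtain j' where j': "j' \<le> nb" "dY (gpb j) (f (b j')) \<le> H"
        using H[OF qg[OF gb]] gpb e3 jb by fastforce
      have uV: "gpb j \<in> VY" using geodD(3)[OF gpb jb(1)] .
      have bV: "b j' \<in> VX" using geodD(3)[OF gb j'(1)] .
      have "dY (f (p i)) (f (b j')) \<le> dY (f (p i)) (gp i') + dY (gp i') (gpb j) + dY (gpb j) (f (b j'))"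
        using tri3[OF mY fpV gpV uV fX[OF bV]] .
      hence "dY (f (p i)) (f (b j')) + c \<le> H' + (3 * \<delta> + 1) + H + c" using i' jb j' by linarith
      hence "lam * (dY (f (p i)) (f (b j')) + c) \<le> \<Delta>" unfolding \<Delta>_def using lam by (intro mult_left_mono) auto
      hence "dX (p i) (b j') \<le> \<Delta>" using qi[OF geodD(3)[OF g i] bV] by linarith
      thus ?thesis using j' by blast
    qed
  qed
  thus ?thesis using slim_fourpt[OF mX gX] by blast
qed



lemma fourpt_transfer:
  assumes f: "fourpt V dV \<delta>" and fW: "\<And>x. x \<in> W \<Longrightarrow> f x \<in> V"
    and cl: "\<And>x y. x \<in> W \<Longrightarrow> y \<in> W \<Longrightarrow> \<bar>dV (f x) (f y) - dW x y\<bar> \<le> c"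
  shows "fourpt W dW (\<delta> + 3 * c)"
  unfolding fourpt_def
proof (intro ballI)
  fix w x y z assume h: "w \<in> W" "x \<in> W" "y \<in> W" "z \<in> W"
  have F: "gromov_product dV (f w) (f x) (f z) \<ge> min (gromov_product dV (f w) (f x) (f y)) (gromov_product dV (f w) (f y) (f z)) - \<delta>"
    using f fW h unfolding fourpt_def by blast
  have c1: "\<And>a b. a \<in> W \<Longrightarrow> b \<in> W \<Longrightarrow> dV (f a) (f b) - dW a b \<le> c \<and> dW a b - dV (f a) (f b) \<le> c"
    using cl by (simp add: abs_le_iff)
  have g1: "gromov_product dW w x z \<ge> gromov_product dV (f w) (f x) (f z) - 3 * c / 2"
    using c1[OF h(1) h(2)] c1[OF h(1) h(4)] c1[OF h(2) h(4)] gp2[of dV "f w" "f x" "f z"] gp2[of dW w x z] by linarith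
  have g2: "gromov_product dW w x y \<le> gromov_product dV (f w) (f x) (f y) + 3 * c / 2"
    using c1[OF h(1) h(2)] c1[OF h(1) h(3)] c1[OF h(2) h(3)] gp2[of dV "f w" "f x" "f y"] gp2[of dW w x y] by linarith
  have g3: "gromov_product dW w y z \<le> gromov_product dV (f w) (f y) (f z) + 3 * c / 2"
    using c1[OF h(1) h(3)] c1[OF h(1) h(4)] c1[OF h(3) h(4)] gp2[of dV "f w" "f y" "f z"] gp2[of dW w y z] by linarith
  have "min (gromov_product dW w x y) (gromov_product dW w y z) \<le>
        min (gromov_product dV (f w) (f x) (f y)) (gromov_product dV (f w) (f y) (f z)) + 3 * c / 2"
    using g2 g3 by linarith
  thus "min (gromov_product dW w x y) (gromov_product dW w y z) - (\<delta> + 3 * c) \<le> gromov_product dW w x z"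
    using F g1 by linarith
qed

section \<open>Walks\<close>

definition revE :: "('v \<times> 'v \<times> real) list \<Rightarrow> ('v \<times> 'v \<times> real) list" where
  "revE es = rev (map (\<lambda>(a, b, l). (b, a, l)) es)"

lemma wchain_append: "wchain E u es1 v \<Longrightarrow> wchain E v es2 w \<Longrightarrow> wchain E u (es1 @ es2) w"
  by (induction es1 arbitrary: u) auto

lemma wchain_single: "(a, b, l) \<in> E \<or> (b, a, l) \<in> E \<Longrightarrow> wchain E a [(a, b, l)] b"
  by simp

lemma wchain_rev: "wchain E u es v \<Longrightarrow> wchain E v (revE es) u"
proof (induction es arbitrary: u)
  case Nil thus ?case by (simp add: revE_def)
next
  case (Cons e es)
  obtain a b l where e: "e = (a, b, l)" by (cases e) auto
  have h: "(a, b, l) \<in> E \<or> (b, a, l) \<in> E" "a = u" "wchain E b es v" using Cons.prems e by auto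
  have "wchain E v (revE es) b" using Cons.IH h(3) .
  moreover have "wchain E b [(b, a, l)] a" using h(1) by auto
  ultimately have "wchain E v (revE es @ [(b, a, l)]) a" by (rule wchain_append)
  thus ?case using e h(2) by (simp add: revE_def)
qed

lemma walk_length_append: "walk_length (es1 @ es2) = walk_length es1 + walk_length es2"
  unfolding walk_length_def by simp

lemma walk_length_rev: "walk_length (revE es) = walk_length es"
  unfolding walk_length_def revE_def by (induction es) auto

lemma walk_length_nonneg:
  assumes nn: "\<forall>(a, b, l)\<in>E. l \<ge> 0" shows "wchain E u es v \<Longrightarrow> walk_length es \<ge> 0"
proof (induction es arbitrary: u)
  case Nil thus ?case by (simp add: walk_length_def)
next
  case (Cons e es)
  obtain a b l where e: "e = (a, b, l)" by (cases e) auto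
  have "l \<ge> 0" using Cons.prems e nn by auto
  moreover have "walk_length es \<ge> 0" using Cons e by auto
  ultimately show ?case using e by (simp add: walk_length_def)
qed

lemma walk_length_Cons: "walk_length ((a, b, l) # es) = l + walk_length es"
  unfolding walk_length_def by simp

lemma gdist_le:
  assumes nn: "\<forall>(a, b, l)\<in>E. l \<ge> 0" and w: "wchain E u es v"
  shows "gdist E u v \<le> walk_length es"
  unfolding gdist_def
proof (rule cInf_lower)
  show "walk_length es \<in> {walk_length es |es. wchain E u es v}" using w by blast
  show "bdd_below {walk_length es |es. wchain E u es v}"
  proof (rule bdd_belowI)
    fix x assume "x \<in> {walk_length es |es. wchain E u es v}"
    then obtain es' where "x = walk_length es'" "wchain E u es' v" by blast
    thus "0 \<le> x" using walk_length_nonneg[OF nn] by simp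
  qed
qed

lemma gdist_ge:
  assumes w: "wchain E u es0 v" and L: "\<And>es. wchain E u es v \<Longrightarrow> L \<le> walk_length es"
  shows "L \<le> gdist E u v"
  unfolding gdist_def
proof (rule cInf_greatest)
  show "{walk_length es |es. wchain E u es v} \<noteq> {}" using w by blast
  fix x assume "x \<in> {walk_length es |es. wchain E u es v}"
  then obtain es' where "x = walk_length es'" "wchain E u es' v" by blast
  thus "L \<le> x" using L by simp
qed

definition conn :: "('v \<times> 'v \<times> real) set \<Rightarrow> 'v \<Rightarrow> 'v \<Rightarrow> bool" where
  "conn E u v \<longleftrightarrow> (\<exists>es. wchain E u es v)"

lemma conn_refl: "conn E u u" unfolding conn_def by (intro exI[of _ "[]"]) simp
lemma conn_sym: "conn E u v \<Longrightarrow> conn E v u"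
proof -
  assume "conn E u v"
  then obtain es where "wchain E u es v" unfolding conn_def by blast
  hence "wchain E v (revE es) u" by (rule wchain_rev)
  thus ?thesis unfolding conn_def by (rule exI)
qed
lemma conn_trans: "conn E u v \<Longrightarrow> conn E v w \<Longrightarrow> conn E u w"
proof -
  assume "conn E u v" "conn E v w"
  then obtain es1 es2 where "wchain E u es1 v" "wchain E v es2 w" unfolding conn_def by blast
  hence "wchain E u (es1 @ es2) w" by (rule wchain_append)
  thus ?thesis unfolding conn_def by (rule exI)
qed
lemma conn_edge: "(a, b, l) \<in> E \<Longrightarrow> conn E a b"
proof -
  assume "(a, b, l) \<in> E"
  hence "wchain E a [(a, b, l)] b" by simp
  thus ?thesis unfolding conn_def by (rule exI)
qed

lemma graph_connected_conn: "graph_connected V E \<longleftrightarrow> (\<forall>u\<in>V. \<forall>v\<in>V. conn E u v)"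
  unfolding graph_connected_def conn_def by simp

lemma gdist_metric:
  assumes gc: "graph_connected V E" and nn: "\<forall>(a, b, l)\<in>E. l \<ge> 0"
  shows "metric_on V (gdist E)"
proof -
  have ex: "\<And>u v. u \<in> V \<Longrightarrow> v \<in> V \<Longrightarrow> \<exists>es. wchain E u es v" using gc unfolding graph_connected_def by blast
  have nonneg: "gdist E u v \<ge> 0" if uv: "u \<in> V" "v \<in> V" for u v
  proof -
    obtain es0 where w: "wchain E u es0 v" using ex[OF uv] by blast
    show ?thesis by (rule gdist_ge[OF w]) (rule walk_length_nonneg[OF nn])
  qed
  have sym1: "gdist E v u \<le> gdist E u v" if uv: "u \<in> V" "v \<in> V" for u v
  proof -
    obtain es0 where w: "wchain E u es0 v" using ex[OF uv] by blast
    show ?thesis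
    proof (rule gdist_ge[OF w])
      fix es assume "wchain E u es v"
      thus "gdist E v u \<le> walk_length es" using gdist_le[OF nn wchain_rev] walk_length_rev by metis
    qed
  qed
  have refl: "gdist E u u = 0" if "u \<in> V" for u
    using gdist_le[OF nn, of u "[]" u] nonneg[OF that that] by (simp add: walk_length_def)
  have tri: "gdist E u w \<le> gdist E u v + gdist E v w" if "u \<in> V" "v \<in> V" "w \<in> V" for u v w
  proof -
    note uvw = that
    obtain es1 where es1: "wchain E u es1 v" using ex uvw by blast
    obtain es2 where es2: "wchain E v es2 w" using ex uvw by blast
    have "gdist E u w - walk_length b \<le> gdist E u v" if b: "wchain E v b w" for b
    proof (rule gdist_ge[OF es1])
      fix a assume a: "wchain E u a v"
      have "gdist E u w \<le> walk_length (a @ b)" using gdist_le[OF nn wchain_append[OF a b]] .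
      thus "gdist E u w - walk_length b \<le> walk_length a" using walk_length_append[of a b] by simp
    qed
    hence "gdist E u w - gdist E u v \<le> gdist E v w"
    proof -
      assume h: "\<And>b. wchain E v b w \<Longrightarrow> gdist E u w - walk_length b \<le> gdist E u v"
      show ?thesis by (rule gdist_ge[OF es2]) (use h in force)
    qed
    thus ?thesis by simp
  qed
  have sym: "gdist E u v = gdist E v u" if "u \<in> V" "v \<in> V" for u v
    using sym1[OF that] sym1[OF that(2) that(1)] by simp
  show ?thesis unfolding metric_on_def using nonneg sym refl tri by blast
qed



definition edges_in :: "'v set \<Rightarrow> ('v \<times> 'v \<times> real) set \<Rightarrow> bool" where
  "edges_in V E \<longleftrightarrow> (\<forall>(a, b, l)\<in>E. a \<in> V \<and> b \<in> V)"

lemma wchain_in: "wchain E u es v \<Longrightarrow> edges_in V E \<Longrightarrow> u \<in> V \<Longrightarrow> v \<in> V"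
proof (induction es arbitrary: u)
  case Nil thus ?case by simp
next
  case (Cons e es)
  obtain a b l where e: "e = (a, b, l)" by (cases e) auto
  have "((a, b, l) \<in> E \<or> (b, a, l) \<in> E)" "wchain E b es v" using Cons.prems e by auto
  hence "b \<in> V" using Cons.prems(2) unfolding edges_in_def by auto
  thus ?case using Cons.IH \<open>wchain E b es v\<close> Cons.prems(2) by blast
qed

lemma lip_walk:
  assumes m: "metric_on V' d'" and ein: "edges_in V E" and FV: "\<And>x. x \<in> V \<Longrightarrow> F x \<in> V'"
    and ed: "\<And>a b l. (a, b, l) \<in> E \<Longrightarrow> d' (F a) (F b) \<le> L * l"
  shows "wchain E u es v \<Longrightarrow> u \<in> V \<Longrightarrow> d' (F u) (F v) \<le> L * walk_length es"
proof (induction es arbitrary: u)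
  case Nil thus ?case using metric_onD(3)[OF m FV] by (simp add: walk_length_def)
next
  case (Cons e es)
  obtain a b l where e: "e = (a, b, l)" by (cases e) auto
  have h: "(a, b, l) \<in> E \<or> (b, a, l) \<in> E" "a = u" "wchain E b es v" using Cons.prems e by auto
  have bV: "b \<in> V" using h(1) ein unfolding edges_in_def by auto
  have vV: "v \<in> V" using wchain_in[OF h(3) ein bV] .
  have ab: "d' (F u) (F b) \<le> L * l"
  proof (cases "(a, b, l) \<in> E")
    case True thus ?thesis using ed[OF True] h(2) by simp
  next
    case False
    hence "(b, a, l) \<in> E" using h(1) by blast
    hence "d' (F b) (F a) \<le> L * l" by (rule ed)
    moreover have "d' (F b) (F a) = d' (F a) (F b)" using metric_onD(2)[OF m FV[OF bV] FV[OF Cons.prems(2)]] h(2) by simp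
    ultimately show ?thesis using h(2) by simp
  qed
  have "d' (F b) (F v) \<le> L * walk_length es" using Cons.IH[OF h(3) bV] .
  moreover have "d' (F u) (F v) \<le> d' (F u) (F b) + d' (F b) (F v)"
    using metric_onD(4)[OF m FV[OF Cons.prems(2)] FV[OF bV] FV[OF vV]] .
  ultimately show ?case using ab e by (simp add: walk_length_Cons algebra_simps)
qed

lemma lip_gdist:
  assumes m: "metric_on V' d'" and ein: "edges_in V E" and FV: "\<And>x. x \<in> V \<Longrightarrow> F x \<in> V'"
    and ed: "\<And>a b l. (a, b, l) \<in> E \<Longrightarrow> d' (F a) (F b) \<le> L * l" and L: "L > 0"
    and gc: "graph_connected V E" and uv: "u \<in> V" "v \<in> V"
  shows "d' (F u) (F v) \<le> L * gdist E u v"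
proof -
  obtain es0 where w: "wchain E u es0 v" using gc uv unfolding graph_connected_def by blast
  have "d' (F u) (F v) / L \<le> gdist E u v"
  proof (rule gdist_ge[OF w])
    fix es assume "wchain E u es v"
    hence "d' (F u) (F v) \<le> L * walk_length es"
      using lip_walk[where V'=V' and d'=d' and V=V and E=E and F=F and L=L, OF m ein FV ed] uv by blast
    thus "d' (F u) (F v) / L \<le> walk_length es" using L by (simp add: divide_le_eq mult.commute)
  qed
  thus ?thesis using L by (simp add: divide_le_eq mult.commute)
qed

lemma conn_transfer:
  assumes ed: "\<And>a b l. (a, b, l) \<in> E \<Longrightarrow> conn E' (F a) (F b)"
  shows "wchain E u es v \<Longrightarrow> conn E' (F u) (F v)"
proof (induction es arbitrary: u)
  case Nil thus ?case by (simp add: conn_refl)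
next
  case (Cons e es)
  obtain a b l where e: "e = (a, b, l)" by (cases e) auto
  have h: "(a, b, l) \<in> E \<or> (b, a, l) \<in> E" "a = u" "wchain E b es v" using Cons.prems e by auto
  have "conn E' (F a) (F b)"
  proof (cases "(a, b, l) \<in> E")
    case True thus ?thesis by (rule ed)
  next
    case False
    hence "(b, a, l) \<in> E" using h(1) by blast
    thus ?thesis by (rule conn_sym[OF ed])
  qed
  hence "conn E' (F u) (F b)" using h(2) by simp
  thus ?case by (rule conn_trans[OF _ Cons.IH[OF h(3)]])
qed



fun walkpt :: "'v \<Rightarrow> ('v \<times> 'v \<times> real) list \<Rightarrow> nat \<Rightarrow> 'v" where
  "walkpt u [] i = u"
| "walkpt u (e # es) 0 = u"
| "walkpt u (e # es) (Suc i) = walkpt (fst (snd e)) es i"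

lemma walkpt_0: "walkpt u es 0 = u" by (cases es) auto

lemma walkpt_split:
  "wchain E u es v \<Longrightarrow> i \<le> length es \<Longrightarrow>
     wchain E u (take i es) (walkpt u es i) \<and> wchain E (walkpt u es i) (drop i es) v"
proof (induction es arbitrary: u i)
  case Nil thus ?case by simp
next
  case (Cons e es)
  obtain a b l where e: "e = (a, b, l)" by (cases e) auto
  show ?case
  proof (cases i)
    case 0 thus ?thesis using Cons.prems by simp
  next
    case (Suc i')
    have h: "(a, b, l) \<in> E \<or> (b, a, l) \<in> E" "a = u" "wchain E b es v" using Cons.prems e by auto
    have "i' \<le> length es" using Cons.prems Suc by simp
    from Cons.IH[OF h(3) this] show ?thesis using h Suc e by simp
  qed
qed

lemma walkpt_shift: "i \<le> length es \<Longrightarrow> walkpt (walkpt u es i) (drop i es) k = walkpt u es (i + k)"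
proof (induction es arbitrary: u i)
  case Nil thus ?case by simp
next
  case (Cons e es)
  show ?case
  proof (cases i)
    case 0 thus ?thesis by (simp add: walkpt_0)
  next
    case (Suc i')
    thus ?thesis using Cons by simp
  qed
qed

lemma walkpt_end: "wchain E u es v \<Longrightarrow> walkpt u es (length es) = v"
  using walkpt_split[of E u es v "length es"] by simp

definition unit_edges :: "('v \<times> 'v \<times> real) set \<Rightarrow> bool" where
  "unit_edges E \<longleftrightarrow> (\<forall>(a, b, l)\<in>E. l = 1)"

lemma walk_length_unit: "unit_edges E \<Longrightarrow> wchain E u es v \<Longrightarrow> walk_length es = real (length es)"
proof (induction es arbitrary: u)
  case Nil thus ?case by (simp add: walk_length_def)
next
  case (Cons e es)
  obtain a b l where e: "e = (a, b, l)" by (cases e) auto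
  have h: "(a, b, l) \<in> E \<or> (b, a, l) \<in> E" "wchain E b es v" using Cons.prems e by auto
  have "l = 1" using h(1) Cons.prems(1) unfolding unit_edges_def by auto
  thus ?case using Cons.IH[OF Cons.prems(1) h(2)] e by (simp add: walk_length_Cons)
qed

lemma unit_nonneg: "unit_edges E \<Longrightarrow> \<forall>(a, b, l)\<in>E. l \<ge> 0"
  unfolding unit_edges_def by auto

lemma unit_geodesic_space:
  assumes gc: "graph_connected V E" and ein: "edges_in V E" and un: "unit_edges E"
  shows "geodesic_space V (gdist E)"
proof -
  have nn: "\<forall>(a, b, l)\<in>E. l \<ge> 0" using unit_nonneg[OF un] .
  have m: "metric_on V (gdist E)" using gdist_metric[OF gc nn] .
  have "\<exists>p n. geod V (gdist E) p n u v" if uv: "u \<in> V" "v \<in> V" for u v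
  proof -
    obtain es0 where "wchain E u es0 v" using gc uv unfolding graph_connected_def by blast
    then obtain es where es: "wchain E u es v" and esmin: "\<And>es'. wchain E u es' v \<Longrightarrow> length es \<le> length es'"
      using ex_has_least_nat[of "\<lambda>es. wchain E u es v" es0 length] by blast
    define n where "n = length es"
    define p where "p = walkpt u es"
    have dlen: "\<And>x y w. wchain E x w y \<Longrightarrow> gdist E x y \<le> real (length w)"
      using gdist_le[OF nn] walk_length_unit[OF un] by metis
    have duv: "gdist E u v = real n"
    proof (rule antisym)
      show "gdist E u v \<le> real n" using dlen[OF es] n_def by simp
      show "real n \<le> gdist E u v"
      proof (rule gdist_ge[OF es])
        fix es' assume "wchain E u es' v"
        thus "real n \<le> walk_length es'" using esmin walk_length_unit[OF un] n_def by fastforce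
      qed
    qed
    have sp: "\<And>i. i \<le> n \<Longrightarrow> wchain E u (take i es) (p i) \<and> wchain E (p i) (drop i es) v"
      using walkpt_split[OF es] unfolding p_def n_def by blast
    have pV: "\<And>i. i \<le> n \<Longrightarrow> p i \<in> V" using sp wchain_in[OF _ ein uv(1)] by blast
    have le: "gdist E (p i) (p j) \<le> real j - real i" if ij: "i \<le> j" "j \<le> n" for i j
    proof -
      have w: "wchain E (p i) (drop i es) v" using sp ij by simp
      have "j - i \<le> length (drop i es)" using ij n_def by simp
      from walkpt_split[OF w this]
      have "wchain E (p i) (take (j - i) (drop i es)) (walkpt (p i) (drop i es) (j - i))" by blast
      moreover have "walkpt (p i) (drop i es) (j - i) = p j"
        unfolding p_def using walkpt_shift[of i es u "j - i"] ij n_def by simp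
      ultimately have "gdist E (p i) (p j) \<le> real (length (take (j - i) (drop i es)))" using dlen by metis
      thus ?thesis using ij n_def by (simp add: of_nat_diff)
    qed
    have ge: "gdist E (p i) (p j) \<ge> real j - real i" if ij: "i \<le> j" "j \<le> n" for i j
    proof -
      have "gdist E u (p i) \<le> real i" using dlen[of u "take i es" "p i"] sp[of i] ij n_def by simp
      moreover have "gdist E (p j) v \<le> real n - real j" using dlen[of "p j" "drop j es" v] sp[of j] ij n_def by simp
      moreover have "gdist E u v \<le> gdist E u (p i) + gdist E (p i) (p j) + gdist E (p j) v"
        using tri3[OF m uv(1) pV pV uv(2)] ij by simp
      ultimately show ?thesis using duv by linarith
    qed
    have "geod V (gdist E) p n u v"
      unfolding geod_def
    proof (intro conjI allI impI)
      show "p 0 = u" unfolding p_def by (simp add: walkpt_0)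
      show "p n = v" unfolding p_def n_def using walkpt_end[OF es] .
      fix i assume i: "i \<le> n"
      show "p i \<in> V" using pV[OF i] .
      fix j assume j: "j \<le> n"
      show "gdist E (p i) (p j) = \<bar>real i - real j\<bar>"
      proof (cases "i \<le> j")
        case True thus ?thesis using le[OF True j] ge[OF True j] by simp
      next
        case False
        hence "j \<le> i" by simp
        moreover have "gdist E (p i) (p j) = gdist E (p j) (p i)" using metric_onD(2)[OF m pV[OF i] pV[OF j]] .
        ultimately show ?thesis using le[OF _ i] ge[OF _ i] by force
      qed
    qed
    thus ?thesis by blast
  qed
  thus ?thesis unfolding geodesic_space_def using m by blast
qed



lemma conn_dist_step:
  assumes nn: "\<forall>(a, b, l)\<in>E. l \<ge> 0" and l: "l \<ge> 0" and h: "u = v \<or> (u, v, l) \<in> E \<or> (v, u, l) \<in> E"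
  shows "conn E u v \<and> gdist E u v \<le> l"
proof -
  have "\<exists>es. wchain E u es v \<and> walk_length es \<le> l"
  proof (cases "u = v")
    case True thus ?thesis using l by (intro exI[of _ "[]"]) (simp add: walk_length_def)
  next
    case False
    hence "(u, v, l) \<in> E \<or> (v, u, l) \<in> E" using h by blast
    hence "wchain E u [(u, v, l)] v" by simp
    thus ?thesis by (intro exI[of _ "[(u, v, l)]"]) (simp add: walk_length_def)
  qed
  then obtain es where "wchain E u es v" "walk_length es \<le> l" by blast
  thus ?thesis unfolding conn_def using gdist_le[OF nn] by force
qed

locale hsetting =
  fixes G (structure) and H :: "nat \<Rightarrow> 'a set" and m :: nat and S :: "'a set"
  assumes grp: "group G"
    and m1: "m \<ge> 1"
    and sub: "\<And>i. i \<in> {1..m} \<Longrightarrow> subgroup (H i) G"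
    and Sc: "S \<subseteq> carrier G"
    and gen: "generate G (S \<union> (\<Union>i\<in>{1..m}. H i)) = carrier G"
begin

sublocale group G by (rule grp)

abbreviation "Gens \<equiv> S \<union> (\<Union>i\<in>{1..m}. H i)"
abbreviation "VR \<equiv> carrier G"
abbreviation "ER \<equiv> rel_cayley_edges G S H m"
abbreviation "VC \<equiv> coset_vertices G H m"
abbreviation "EC \<equiv> coset_edges G S H m"
abbreviation "VZ \<equiv> coned_vertices G H m"
abbreviation "EZ \<equiv> coned_edges G S H m"

lemma Gens_c: "Gens \<subseteq> carrier G"
  using Sc sub subgroup.subset by blast

lemma H_c: "i \<in> {1..m} \<Longrightarrow> H i \<subseteq> carrier G"
  using sub subgroup.subset by blast

lemma ER_mem: "(a, b, l) \<in> ER \<longleftrightarrow> a \<in> carrier G \<and> l = 1 \<and> (\<exists>s\<in>Gens. b = a \<otimes> s)"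
  unfolding rel_cayley_edges_def by auto

lemma ER_edge: "a \<in> carrier G \<Longrightarrow> s \<in> Gens \<Longrightarrow> (a, a \<otimes> s, 1) \<in> ER"
  unfolding ER_mem by blast

lemma R_ein: "edges_in VR ER"
  unfolding edges_in_def
proof (clarify)
  fix a b l assume "(a, b, l) \<in> ER"
  then obtain s where s: "a \<in> carrier G" "s \<in> Gens" "b = a \<otimes> s" using ER_mem by blast
  have "s \<in> carrier G" using s(2) Gens_c by blast
  thus "a \<in> VR \<and> b \<in> VR" using s by simp
qed

lemma R_unit: "unit_edges ER"
  unfolding unit_edges_def by (auto simp: ER_mem)

lemma R_nn: "\<forall>(a, b, l)\<in>ER. l \<ge> 0"
  using unit_nonneg[OF R_unit] .

lemma conn_R_one: "g \<in> generate G Gens \<Longrightarrow> conn ER \<one> g"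
proof (induction rule: generate.induct)
  case one thus ?case by (rule conn_refl)
next
  case (incl h)
  have "h \<in> carrier G" using incl Gens_c by blast
  hence "(\<one>, \<one> \<otimes> h, 1) \<in> ER" using ER_edge incl by blast
  hence "(\<one>, h, 1) \<in> ER" using \<open>h \<in> carrier G\<close> by simp
  thus ?case by (rule conn_edge)
next
  case (inv h)
  have hc: "h \<in> carrier G" using inv Gens_c by blast
  hence "(inv h, inv h \<otimes> h, 1) \<in> ER" using ER_edge inv by blast
  hence "(inv h, \<one>, 1) \<in> ER" using hc by simp
  hence "conn ER (inv h) \<one>" by (rule conn_edge)
  thus ?case by (rule conn_sym)
next
  case (eng h1 h2)
  have h1c: "h1 \<in> carrier G" using eng(1) gen by simp
  have tr: "conn ER (h1 \<otimes> a) (h1 \<otimes> b)" if ab: "(a, b, l) \<in> ER" for a b l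
  proof -
    obtain s where s: "a \<in> carrier G" "l = 1" "s \<in> Gens" "b = a \<otimes> s" using ab ER_mem by blast
    have "(h1 \<otimes> a, (h1 \<otimes> a) \<otimes> s, 1) \<in> ER" using ER_edge s h1c by simp
    moreover have "s \<in> carrier G" using s(3) Gens_c by blast
    moreover have "(h1 \<otimes> a) \<otimes> s = h1 \<otimes> b" using s h1c \<open>s \<in> carrier G\<close> by (simp add: m_assoc)
    ultimately have "(h1 \<otimes> a, h1 \<otimes> b, 1) \<in> ER" by simp
    thus ?thesis by (rule conn_edge)
  qed
  obtain es where w: "wchain ER \<one> es h2" using eng.IH(2) unfolding conn_def by blast
  have "conn ER ((\<lambda>x. h1 \<otimes> x) \<one>) ((\<lambda>x. h1 \<otimes> x) h2)"
    using conn_transfer[where E=ER and E'=ER and F="\<lambda>x. h1 \<otimes> x", OF tr w] .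
  hence "conn ER h1 (h1 \<otimes> h2)" using h1c by simp
  thus ?case by (rule conn_trans[OF eng.IH(1)])
qed

lemma R_conn: "graph_connected VR ER"
  unfolding graph_connected_conn
proof (intro ballI)
  fix u v assume "u \<in> carrier G" "v \<in> carrier G"
  hence "conn ER \<one> u" "conn ER \<one> v" using conn_R_one gen by auto
  thus "conn ER u v" by (rule conn_trans[OF conn_sym])
qed

lemma R_geo: "geodesic_space VR (gdist ER)"
  using unit_geodesic_space[OF R_conn R_ein R_unit] .

lemma R_metric: "metric_on VR (gdist ER)"
  using R_geo unfolding geodesic_space_def by blast

lemma coset_self: "i \<in> {1..m} \<Longrightarrow> g \<in> carrier G \<Longrightarrow> g \<in> g <# H i"
  unfolding l_coset_def using sub subgroup.one_closed by force

lemma coset_mult: "i \<in> {1..m} \<Longrightarrow> g \<in> carrier G \<Longrightarrow> h \<in> H i \<Longrightarrow> (g \<otimes> h) <# H i = g <# H i"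
proof -
  assume h: "i \<in> {1..m}" "g \<in> carrier G" "h \<in> H i"
  have "g \<otimes> h \<in> g <# H i" unfolding l_coset_def using h by blast
  thus ?thesis using l_repr_independence[OF _ h(2) sub[OF h(1)]] by simp
qed

lemma coset_mem_eq: "i \<in> {1..m} \<Longrightarrow> g \<in> carrier G \<Longrightarrow> a \<in> g <# H i \<Longrightarrow> a <# H i = g <# H i"
  using l_repr_independence[OF _ _ sub] by simp

lemma coset_c: "i \<in> {1..m} \<Longrightarrow> g \<in> carrier G \<Longrightarrow> a \<in> g <# H i \<Longrightarrow> a \<in> carrier G"
  using l_coset_carrier sub by blast

lemma same_coset_R: 
  assumes i: "i \<in> {1..m}" and g: "g \<in> carrier G" and a: "a \<in> g <# H i" and b: "b \<in> g <# H i"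
  shows "gdist ER a b \<le> 1"
proof -
  obtain h1 h2 where h: "h1 \<in> H i" "h2 \<in> H i" "a = g \<otimes> h1" "b = g \<otimes> h2"
    using a b unfolding l_coset_def by blast
  have hc: "h1 \<in> carrier G" "h2 \<in> carrier G" using h H_c[OF i] by auto
  have s: "inv h1 \<otimes> h2 \<in> H i" using sub[OF i] h subgroup.m_closed subgroup.m_inv_closed by metis
  have e: "h1 \<otimes> (inv h1 \<otimes> h2) = h2" using hc by (simp add: m_assoc[symmetric])
  have "a \<otimes> (inv h1 \<otimes> h2) = b" using h hc g e by (simp add: m_assoc)
  moreover have "a \<in> carrier G" using h hc g by simp
  ultimately have "(a, b, 1) \<in> ER" using ER_edge[of a "inv h1 \<otimes> h2"] s i by blast
  thus ?thesis using conn_dist_step[OF R_nn] by simp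
qed

end



context hsetting
begin

abbreviation "Xs \<equiv> S \<union> m_inv G ` S \<union> {\<one>}"

lemma VC_mem: "u \<in> VC \<longleftrightarrow> (\<exists>i g. u = (i, g <# H i) \<and> i \<in> {1..m} \<and> g \<in> carrier G)"
  unfolding coset_vertices_def by blast

lemma EC_mem: "(u, v, l) \<in> EC \<longleftrightarrow> l = 1 \<and> u \<in> VC \<and> v \<in> VC \<and> u \<noteq> v \<and>
    (\<exists>a\<in>snd u. \<exists>b\<in>snd v. \<exists>x\<in>Xs. b = a \<otimes> x)"
  unfolding coset_edges_def by blast

lemma C_ein: "edges_in VC EC"
  unfolding edges_in_def by (auto simp: EC_mem)

lemma C_unit: "unit_edges EC"
  unfolding unit_edges_def by (auto simp: EC_mem)

lemma C_nn: "\<forall>(a, b, l)\<in>EC. l \<ge> 0"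
  using unit_nonneg[OF C_unit] .

lemma cstep:
  assumes "u \<in> VC" "v \<in> VC" "a \<in> snd u" "b \<in> snd v" "x \<in> Xs" "b = a \<otimes> x"
  shows "conn EC u v \<and> gdist EC u v \<le> 1"
proof -
  have "u = v \<or> (u, v, 1) \<in> EC" using assms unfolding EC_mem by blast
  thus ?thesis using conn_dist_step[OF C_nn, of 1 u v] by auto
qed

definition F :: "'a \<Rightarrow> nat \<times> 'a set" where "F g = (1, g <# H 1)"

lemma one_m: "1 \<in> {1..m}" using m1 by simp

lemma F_VC: "g \<in> carrier G \<Longrightarrow> F g \<in> VC"
  unfolding F_def VC_mem using one_m by blast

lemma Redge_C:
  assumes a: "a \<in> carrier G" and s: "s \<in> Gens"
  shows "(conn EC (F a) (F (a \<otimes> s))) \<and> (metric_on VC (gdist EC) \<longrightarrow> gdist EC (F a) (F (a \<otimes> s)) \<le> 2)"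
proof -
  have sc: "s \<in> carrier G" using s Gens_c by blast
  have as: "a \<otimes> s \<in> carrier G" using a sc by simp
  show ?thesis
  proof (cases "s \<in> S")
    case True
    have "conn EC (F a) (F (a \<otimes> s)) \<and> gdist EC (F a) (F (a \<otimes> s)) \<le> 1"
      by (rule cstep[OF F_VC[OF a] F_VC[OF as], of a "a \<otimes> s" s])
        (use True a as coset_self[OF one_m] in \<open>auto simp: F_def\<close>)
    thus ?thesis by simp
  next
    case False
    then obtain j where j: "j \<in> {1..m}" "s \<in> H j" using s by blast
    define w where "w = (j, a <# H j)"
    have wV: "w \<in> VC" unfolding w_def VC_mem using j a by blast
    have o: "\<one> \<in> Xs" by simp
    have s1: "conn EC (F a) w \<and> gdist EC (F a) w \<le> 1"
      by (rule cstep[OF F_VC[OF a] wV, of a a \<one>])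
        (use a coset_self[OF one_m a] coset_self[OF j(1) a] in \<open>auto simp: F_def w_def\<close>)
    have "a \<otimes> s \<in> a <# H j" unfolding l_coset_def using j by blast
    hence s2: "conn EC w (F (a \<otimes> s)) \<and> gdist EC w (F (a \<otimes> s)) \<le> 1"
      by (intro cstep[OF wV F_VC[OF as], of "a \<otimes> s" "a \<otimes> s" \<one>])
        (use as coset_self[OF one_m as] in \<open>auto simp: F_def w_def\<close>)
    have "conn EC (F a) (F (a \<otimes> s))" using conn_trans[OF conjunct1[OF s1] conjunct1[OF s2]] .
    moreover have "metric_on VC (gdist EC) \<longrightarrow> gdist EC (F a) (F (a \<otimes> s)) \<le> 2"
    proof
      assume mc: "metric_on VC (gdist EC)"
      have "gdist EC (F a) (F (a \<otimes> s)) \<le> gdist EC (F a) w + gdist EC w (F (a \<otimes> s))"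
        using metric_onD(4)[OF mc F_VC[OF a] wV F_VC[OF as]] .
      thus "gdist EC (F a) (F (a \<otimes> s)) \<le> 2" using s1 s2 by linarith
    qed
    ultimately show ?thesis by blast
  qed
qed

lemma C_conn: "graph_connected VC EC"
proof -
  have cF: "conn EC (F \<one>) (F g)" if g: "g \<in> carrier G" for g
  proof -
    obtain es where w: "wchain ER \<one> es g" using R_conn g unfolding graph_connected_def by blast
    have ed: "conn EC (F a) (F b)" if ab: "(a, b, l) \<in> ER" for a b l
    proof -
      obtain s where s: "a \<in> carrier G" "s \<in> Gens" "b = a \<otimes> s" using ab ER_mem by blast
      show ?thesis using Redge_C[OF s(1) s(2)] s(3) by blast
    qed
    show ?thesis using conn_transfer[where E=ER and E'=EC and F=F, OF ed w] .
  qed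
  have cu: "conn EC u (F \<one>)" if u: "u \<in> VC" for u
  proof -
    obtain i g where ig: "u = (i, g <# H i)" "i \<in> {1..m}" "g \<in> carrier G" using u VC_mem by blast
    have "conn EC u (F g) \<and> gdist EC u (F g) \<le> 1"
      by (rule cstep[OF u F_VC[OF ig(3)], of g g \<one>])
        (use ig coset_self[OF one_m ig(3)] coset_self[OF ig(2) ig(3)] in \<open>auto simp: F_def\<close>)
    hence "conn EC u (F g)" by blast
    thus ?thesis using conn_sym[OF cF[OF ig(3)]] by (rule conn_trans)
  qed
  show ?thesis unfolding graph_connected_conn
  proof (intro ballI)
    fix u v assume uv: "u \<in> VC" "v \<in> VC"
    show "conn EC u v" using conn_trans[OF cu[OF uv(1)] conn_sym[OF cu[OF uv(2)]]] .
  qed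
qed


lemma C_geo: "geodesic_space VC (gdist EC)"
  using unit_geodesic_space[OF C_conn C_ein C_unit] .

lemma C_metric: "metric_on VC (gdist EC)"
  using C_geo unfolding geodesic_space_def by blast

definition Fc :: "nat \<times> 'a set \<Rightarrow> 'a" where "Fc u = (SOME a. a \<in> snd u)"

lemma Fc_mem:
  assumes u: "u = (i, g <# H i)" "i \<in> {1..m}" "g \<in> carrier G"
  shows "Fc u \<in> g <# H i" "Fc u \<in> carrier G" "Fc u <# H i = g <# H i"
proof -
  have "g \<in> snd u" using coset_self[OF u(2,3)] u(1) by simp
  hence "Fc u \<in> snd u" unfolding Fc_def by (rule someI)
  thus a: "Fc u \<in> g <# H i" using u(1) by simp
  show "Fc u \<in> carrier G" using coset_c[OF u(2,3) a] .
  show "Fc u <# H i = g <# H i" using coset_mem_eq[OF u(2,3) a] .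
qed

lemma R_step:
  assumes a: "a \<in> carrier G" and x: "x \<in> Xs"
  shows "gdist ER a (a \<otimes> x) \<le> 1"
proof -
  have "a = a \<otimes> x \<or> (a, a \<otimes> x, 1) \<in> ER \<or> (a \<otimes> x, a, 1) \<in> ER"
  proof (cases "x \<in> S")
    case True thus ?thesis using ER_edge[OF a] by blast
  next
    case False
    show ?thesis
    proof (cases "x = \<one>")
      case True thus ?thesis using a by simp
    next
      case False
      with \<open>x \<notin> S\<close> x obtain s where s: "s \<in> S" "x = inv s" by blast
      have sc: "s \<in> carrier G" using s Sc by blast
      have "(a \<otimes> x, (a \<otimes> x) \<otimes> s, 1) \<in> ER" using ER_edge[of "a \<otimes> x" s] s a sc by simp
      moreover have "(a \<otimes> x) \<otimes> s = a" using s a sc by (simp add: m_assoc)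
      ultimately show ?thesis by simp
    qed
  qed
  thus ?thesis using conn_dist_step[OF R_nn, of 1 a "a \<otimes> x"] by simp
qed

lemma QF1: "a \<in> carrier G \<Longrightarrow> b \<in> carrier G \<Longrightarrow> gdist EC (F a) (F b) \<le> 2 * gdist ER a b"
proof -
  assume ab: "a \<in> carrier G" "b \<in> carrier G"
  have ed: "gdist EC (F x) (F y) \<le> 2 * l" if xy: "(x, y, l) \<in> ER" for x y l
  proof -
    obtain s where s: "x \<in> carrier G" "l = 1" "s \<in> Gens" "y = x \<otimes> s" using xy ER_mem by blast
    show ?thesis using Redge_C[OF s(1) s(3)] s C_metric by simp
  qed
  show ?thesis
    by (rule lip_gdist[where V'=VC and d'="gdist EC" and V=VR and E=ER and F=F and L=2, OF C_metric R_ein F_VC ed _ R_conn ab]) simp_all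
qed

lemma QF2: "u \<in> VC \<Longrightarrow> v \<in> VC \<Longrightarrow> gdist ER (Fc u) (Fc v) \<le> 3 * gdist EC u v"
proof -
  assume uv: "u \<in> VC" "v \<in> VC"
  have FcV: "Fc w \<in> carrier G" if w: "w \<in> VC" for w
    using w VC_mem Fc_mem(2) by metis
  have ed: "gdist ER (Fc x) (Fc y) \<le> 3 * l" if xy: "(x, y, l) \<in> EC" for x y l
  proof -
    have h: "l = 1" "x \<in> VC" "y \<in> VC" and "\<exists>a\<in>snd x. \<exists>b\<in>snd y. \<exists>z\<in>Xs. b = a \<otimes> z" using xy EC_mem by blast+
    then obtain a b z where abz: "a \<in> snd x" "b \<in> snd y" "z \<in> Xs" "b = a \<otimes> z" by blast
    obtain i g where ig: "x = (i, g <# H i)" "i \<in> {1..m}" "g \<in> carrier G" using h(2) VC_mem by blast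
    obtain j g' where jg: "y = (j, g' <# H j)" "j \<in> {1..m}" "g' \<in> carrier G" using h(3) VC_mem by blast
    have ac: "a \<in> carrier G" using coset_c[OF ig(2,3)] abz(1) ig(1) by simp
    have bc: "b \<in> carrier G" using coset_c[OF jg(2,3)] abz(2) jg(1) by simp
    have d1: "gdist ER (Fc x) a \<le> 1" using same_coset_R[OF ig(2,3) Fc_mem(1)[OF ig]] abz(1) ig(1) by simp
    have d2: "gdist ER a b \<le> 1" using R_step[OF ac abz(3)] abz(4) by simp
    have d3: "gdist ER b (Fc y) \<le> 1" using same_coset_R[OF jg(2,3) _ Fc_mem(1)[OF jg]] abz(2) jg(1) by simp
    have "gdist ER (Fc x) (Fc y) \<le> gdist ER (Fc x) a + gdist ER a b + gdist ER b (Fc y)"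
      using tri3[OF R_metric FcV[OF h(2)] ac bc FcV[OF h(3)]] .
    thus ?thesis using d1 d2 d3 h(1) by linarith
  qed
  show ?thesis
    by (rule lip_gdist[where V'=VR and d'="gdist ER" and V=VC and E=EC and F=Fc and L=3, OF R_metric C_ein FcV ed _ C_conn uv]) simp_all
qed

lemma QF3: "g \<in> carrier G \<Longrightarrow> gdist ER g (Fc (F g)) \<le> 1"
  using same_coset_R[OF one_m _ coset_self[OF one_m] Fc_mem(1)[OF F_def one_m]] by blast

lemma QF4: "u \<in> VC \<Longrightarrow> gdist EC u (F (Fc u)) \<le> 1"
proof -
  assume u: "u \<in> VC"
  obtain i g where ig: "u = (i, g <# H i)" "i \<in> {1..m}" "g \<in> carrier G" using u VC_mem by blast
  have a: "Fc u \<in> carrier G" using Fc_mem(2)[OF ig] .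
  have "conn EC u (F (Fc u)) \<and> gdist EC u (F (Fc u)) \<le> 1"
    by (rule cstep[OF u F_VC[OF a], of "Fc u" "Fc u" \<one>])
      (use Fc_mem(1)[OF ig] ig(1) a coset_self[OF one_m a] in \<open>auto simp: F_def\<close>)
  thus ?thesis by blast
qed

theorem part1: "(\<exists>\<delta>. fourpt VR (gdist ER) \<delta>) \<longleftrightarrow> (\<exists>\<delta>. fourpt VC (gdist EC) \<delta>)"
proof
  assume "\<exists>\<delta>. fourpt VR (gdist ER) \<delta>"
  then obtain \<delta> where f: "fourpt VR (gdist ER) \<delta>" by blast
  have FcV: "Fc w \<in> carrier G" if w: "w \<in> VC" for w
    using w VC_mem Fc_mem(2) by metis
  have qi: "gdist ER (Fc a) (Fc b) \<le> 3 * gdist EC a b + 2 \<and> gdist EC a b \<le> 3 * (gdist ER (Fc a) (Fc b) + 2)"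
    if ab: "a \<in> VC" "b \<in> VC" for a b
  proof -
    have e1: "gdist ER (Fc a) (Fc b) \<le> 3 * gdist EC a b" using QF2[OF ab] .
    have "gdist EC a b \<le> gdist EC a (F (Fc a)) + gdist EC (F (Fc a)) (F (Fc b)) + gdist EC (F (Fc b)) b"
      using tri3[OF C_metric ab(1) F_VC[OF FcV[OF ab(1)]] F_VC[OF FcV[OF ab(2)]] ab(2)] .
    moreover have "gdist EC (F (Fc b)) b = gdist EC b (F (Fc b))"
      using metric_onD(2)[OF C_metric F_VC[OF FcV[OF ab(2)]] ab(2)] .
    moreover have "gdist EC (F (Fc a)) (F (Fc b)) \<le> 2 * gdist ER (Fc a) (Fc b)" using QF1 FcV ab by blast
    moreover have "gdist ER (Fc a) (Fc b) \<ge> 0" using metric_onD(1)[OF R_metric FcV[OF ab(1)] FcV[OF ab(2)]] .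
    ultimately have "gdist EC a b \<le> 2 * gdist ER (Fc a) (Fc b) + 2" using QF4[OF ab(1)] QF4[OF ab(2)] by linarith
    hence "gdist EC a b \<le> 3 * (gdist ER (Fc a) (Fc b) + 2)" using \<open>gdist ER (Fc a) (Fc b) \<ge> 0\<close> by simp
    moreover have "gdist EC a b \<ge> 0" using metric_onD(1)[OF C_metric ab] .
    ultimately show ?thesis using e1 by linarith
  qed
  show "\<exists>\<delta>. fourpt VC (gdist EC) \<delta>"
    by (rule qi_hyperbolic[OF C_geo R_geo f FcV _ _ qi]) simp_all
next
  assume "\<exists>\<delta>. fourpt VC (gdist EC) \<delta>"
  then obtain \<delta> where f: "fourpt VC (gdist EC) \<delta>" by blast
  have qi: "gdist EC (F a) (F b) \<le> 3 * gdist ER a b + 2 \<and> gdist ER a b \<le> 3 * (gdist EC (F a) (F b) + 2)"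
    if ab: "a \<in> VR" "b \<in> VR" for a b
  proof -
    have e1: "gdist EC (F a) (F b) \<le> 2 * gdist ER a b" using QF1[OF ab] .
    have FcF: "Fc (F x) \<in> carrier G" if "x \<in> carrier G" for x
      using Fc_mem(2)[OF F_def one_m that] .
    have "gdist ER a b \<le> gdist ER a (Fc (F a)) + gdist ER (Fc (F a)) (Fc (F b)) + gdist ER (Fc (F b)) b"
      using tri3[OF R_metric ab(1) FcF[OF ab(1)] FcF[OF ab(2)] ab(2)] .
    moreover have "gdist ER (Fc (F b)) b = gdist ER b (Fc (F b))"
      using metric_onD(2)[OF R_metric FcF[OF ab(2)] ab(2)] .
    moreover have "gdist ER (Fc (F a)) (Fc (F b)) \<le> 3 * gdist EC (F a) (F b)" using QF2 F_VC ab by blast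
    moreover have "gdist EC (F a) (F b) \<ge> 0" using metric_onD(1)[OF C_metric F_VC[OF ab(1)] F_VC[OF ab(2)]] .
    ultimately have "gdist ER a b \<le> 3 * gdist EC (F a) (F b) + 2" using QF3[OF ab(1)] QF3[OF ab(2)] by linarith
    hence "gdist ER a b \<le> 3 * (gdist EC (F a) (F b) + 2)" using \<open>gdist EC (F a) (F b) \<ge> 0\<close> by simp
    moreover have "gdist ER a b \<ge> 0" using metric_onD(1)[OF R_metric ab] .
    ultimately show ?thesis using e1 by linarith
  qed
  show "\<exists>\<delta>. fourpt VR (gdist ER) \<delta>"
    by (rule qi_hyperbolic[OF R_geo C_geo f F_VC _ _ qi]) simp_all
qed


lemma VZ_mem: "x \<in> VZ \<longleftrightarrow> (\<exists>a\<in>carrier G. x = Inl a) \<or> (\<exists>u\<in>VC. x = Inr u)"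
  unfolding coned_vertices_def by blast

lemma EZ_mem: "(x, y, l) \<in> EZ \<longleftrightarrow>
   (\<exists>g s. x = Inl g \<and> y = Inl (g \<otimes> s) \<and> l = 1 \<and> g \<in> carrier G \<and> s \<in> S) \<or>
   (\<exists>g i. x = Inl g \<and> y = Inr (i, g <# H i) \<and> l = 1 / 2 \<and> g \<in> carrier G \<and> i \<in> {1..m})"
  unfolding coned_edges_def by blast

lemma cone: "g \<in> carrier G \<Longrightarrow> i \<in> {1..m} \<Longrightarrow> (Inl g, Inr (i, g <# H i), 1 / 2) \<in> EZ"
  unfolding EZ_mem by blast

lemma Sedge: "g \<in> carrier G \<Longrightarrow> s \<in> S \<Longrightarrow> (Inl g, Inl (g \<otimes> s), 1) \<in> EZ"
  unfolding EZ_mem by blast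

lemma Z_ein: "edges_in VZ EZ"
  unfolding edges_in_def
proof (clarify)
  fix x y l assume "(x, y, l) \<in> EZ"
  thus "x \<in> VZ \<and> y \<in> VZ"
  proof (unfold EZ_mem, elim disjE exE conjE)
    fix g s assume h: "x = Inl g" "y = Inl (g \<otimes> s)" "g \<in> carrier G" "s \<in> S"
    have "s \<in> carrier G" using h Sc by blast
    thus ?thesis using h unfolding VZ_mem by auto
  next
    fix g i assume h: "x = Inl g" "y = Inr (i, g <# H i)" "g \<in> carrier G" "i \<in> {1..m}"
    have "(i, g <# H i) \<in> VC" using h VC_mem by blast
    thus ?thesis using h unfolding VZ_mem by auto
  qed
qed

lemma Z_nn: "\<forall>(a, b, l)\<in>EZ. l \<ge> 0"
  by (auto simp: EZ_mem)

lemma RZ_edge: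
  assumes a: "a \<in> carrier G" and s: "s \<in> Gens"
  shows "conn EZ (Inl a) (Inl (a \<otimes> s)) \<and> (metric_on VZ (gdist EZ) \<longrightarrow> gdist EZ (Inl a) (Inl (a \<otimes> s)) \<le> 1)"
proof (cases "s \<in> S")
  case True
  thus ?thesis using conn_dist_step[OF Z_nn, of 1 "Inl a" "Inl (a \<otimes> s)"] Sedge[OF a True] by simp
next
  case False
  then obtain j where j: "j \<in> {1..m}" "s \<in> H j" using s by blast
  have sc: "s \<in> carrier G" using s Gens_c by blast
  have as: "a \<otimes> s \<in> carrier G" using a sc by simp
  define w :: "'a + (nat \<times> 'a set)" where "w = Inr (j, a <# H j)"
  have e1: "(Inl a, w, 1 / 2) \<in> EZ" using cone[OF a j(1)] w_def by simp
  have "(a \<otimes> s) <# H j = a <# H j" using coset_mult[OF j(1) a j(2)] .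
  hence e2: "(Inl (a \<otimes> s), w, 1 / 2) \<in> EZ" using cone[OF as j(1)] w_def by simp
  have s1: "conn EZ (Inl a) w \<and> gdist EZ (Inl a) w \<le> 1 / 2" using conn_dist_step[OF Z_nn, of "1/2"] e1 by simp
  have s2: "conn EZ w (Inl (a \<otimes> s)) \<and> gdist EZ w (Inl (a \<otimes> s)) \<le> 1 / 2" using conn_dist_step[OF Z_nn, of "1/2"] e2 by simp
  have "conn EZ (Inl a) (Inl (a \<otimes> s))" using conn_trans[OF conjunct1[OF s1] conjunct1[OF s2]] .
  moreover have "metric_on VZ (gdist EZ) \<longrightarrow> gdist EZ (Inl a) (Inl (a \<otimes> s)) \<le> 1"
  proof
    assume mz: "metric_on VZ (gdist EZ)"
    have V: "Inl a \<in> VZ" "w \<in> VZ" "Inl (a \<otimes> s) \<in> VZ" using a as j VZ_mem VC_mem unfolding w_def by blast+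
    have "gdist EZ (Inl a) (Inl (a \<otimes> s)) \<le> gdist EZ (Inl a) w + gdist EZ w (Inl (a \<otimes> s))"
      using metric_onD(4)[OF mz V] .
    thus "gdist EZ (Inl a) (Inl (a \<otimes> s)) \<le> 1" using s1 s2 by linarith
  qed
  ultimately show ?thesis by blast
qed

lemma Z_conn: "graph_connected VZ EZ"
proof -
  have cI: "conn EZ (Inl \<one>) (Inl g)" if g: "g \<in> carrier G" for g
  proof -
    obtain es where w: "wchain ER \<one> es g" using R_conn g unfolding graph_connected_def by blast
    have ed: "conn EZ (Inl a) (Inl b)" if ab: "(a, b, l) \<in> ER" for a b l
    proof -
      obtain s where s: "a \<in> carrier G" "s \<in> Gens" "b = a \<otimes> s" using ab ER_mem by blast
      show ?thesis using RZ_edge[OF s(1) s(2)] s(3) by blast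
    qed
    show ?thesis using conn_transfer[where E=ER and E'=EZ and F=Inl, OF ed w] .
  qed
  have cx: "conn EZ x (Inl \<one>)" if x: "x \<in> VZ" for x
  proof (cases "\<exists>a\<in>carrier G. x = Inl a")
    case True
    then obtain a where "a \<in> carrier G" "x = Inl a" by blast
    thus ?thesis using conn_sym[OF cI] by simp
  next
    case False
    then obtain u where u: "u \<in> VC" "x = Inr u" using x VZ_mem by blast
    obtain i g where ig: "u = (i, g <# H i)" "i \<in> {1..m}" "g \<in> carrier G" using u VC_mem by blast
    have "conn EZ (Inl g) x" using conn_edge[OF cone[OF ig(3) ig(2)]] u ig by simp
    thus ?thesis using conn_trans[OF conn_sym conn_sym[OF cI[OF ig(3)]]] by blast
  qed
  show ?thesis unfolding graph_connected_conn
  proof (intro ballI)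
    fix u v assume uv: "u \<in> VZ" "v \<in> VZ"
    show "conn EZ u v" using conn_trans[OF cx[OF uv(1)] conn_sym[OF cx[OF uv(2)]]] .
  qed
qed

lemma Z_metric: "metric_on VZ (gdist EZ)"
  using gdist_metric[OF Z_conn Z_nn] .

lemma DZ1: "a \<in> carrier G \<Longrightarrow> b \<in> carrier G \<Longrightarrow> gdist EZ (Inl a) (Inl b) \<le> gdist ER a b"
proof -
  assume ab: "a \<in> carrier G" "b \<in> carrier G"
  have ed: "gdist EZ (Inl x) (Inl y) \<le> 1 * l" if xy: "(x, y, l) \<in> ER" for x y l
  proof -
    obtain s where s: "x \<in> carrier G" "l = 1" "s \<in> Gens" "y = x \<otimes> s" using xy ER_mem by blast
    show ?thesis using RZ_edge[OF s(1) s(3)] s Z_metric by simp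
  qed
  have IV: "Inl x \<in> VZ" if "x \<in> VR" for x using that VZ_mem by blast
  have "gdist EZ (Inl a) (Inl b) \<le> 1 * gdist ER a b"
    by (rule lip_gdist[where V'=VZ and d'="gdist EZ" and V=VR and E=ER and F=Inl and L=1, OF Z_metric R_ein IV ed _ R_conn ab]) simp_all
  thus ?thesis by simp
qed

lemma abs_metric: "metric_on UNIV (\<lambda>x y::real. \<bar>x - y\<bar>)"
  unfolding metric_on_def by auto

lemma DZ2: "a \<in> carrier G \<Longrightarrow> b \<in> carrier G \<Longrightarrow> gdist ER a b \<le> gdist EZ (Inl a) (Inl b)"
proof -
  assume ab: "a \<in> carrier G" "b \<in> carrier G"
  define \<phi> :: "'a + (nat \<times> 'a set) \<Rightarrow> real" where "\<phi> = (\<lambda>x. case x of Inl y \<Rightarrow> gdist ER a y | Inr u \<Rightarrow> Inf (gdist ER a ` snd u) + 1 / 2)"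
  have ed: "\<bar>\<phi> x - \<phi> y\<bar> \<le> 1 * l" if xy: "(x, y, l) \<in> EZ" for x y l
    using xy unfolding EZ_mem
  proof (elim disjE exE conjE)
    fix g s assume h: "x = Inl g" "y = Inl (g \<otimes> s)" "l = 1" "g \<in> carrier G" "s \<in> S"
    have sX: "s \<in> Xs" using h by simp
    have gs: "g \<otimes> s \<in> carrier G" using h Sc by blast
    have d: "gdist ER g (g \<otimes> s) \<le> 1" using R_step[OF h(4) sX] .
    have "gdist ER a (g \<otimes> s) \<le> gdist ER a g + gdist ER g (g \<otimes> s)" using metric_onD(4)[OF R_metric ab(1) h(4) gs] .
    moreover have "gdist ER a g \<le> gdist ER a (g \<otimes> s) + gdist ER (g \<otimes> s) g" using metric_onD(4)[OF R_metric ab(1) gs h(4)] .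
    moreover have "gdist ER (g \<otimes> s) g = gdist ER g (g \<otimes> s)" using metric_onD(2)[OF R_metric gs h(4)] .
    ultimately show ?thesis using h d unfolding \<phi>_def by simp
  next
    fix g i assume h: "x = Inl g" "y = Inr (i, g <# H i)" "l = 1 / 2" "g \<in> carrier G" "i \<in> {1..m}"
    define I where "I = Inf (gdist ER a ` (g <# H i))"
    have gC: "g \<in> g <# H i" using coset_self[OF h(5) h(4)] .
    have I1: "I \<le> gdist ER a g" unfolding I_def
    proof (rule cInf_lower)
      show "gdist ER a g \<in> gdist ER a ` (g <# H i)" using gC by blast
      show "bdd_below (gdist ER a ` (g <# H i))"
      proof (rule bdd_belowI)
        fix z assume "z \<in> gdist ER a ` (g <# H i)"
        then obtain c where c: "c \<in> g <# H i" "z = gdist ER a c" by blast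
        thus "0 \<le> z" using metric_onD(1)[OF R_metric ab(1) coset_c[OF h(5) h(4) c(1)]] by simp
      qed
    qed
    have I2: "gdist ER a g - 1 \<le> I" unfolding I_def
    proof (rule cInf_greatest)
      show "gdist ER a ` (g <# H i) \<noteq> {}" using gC by blast
      fix z assume "z \<in> gdist ER a ` (g <# H i)"
      then obtain c where c: "c \<in> g <# H i" "z = gdist ER a c" by blast
      have cc: "c \<in> carrier G" using coset_c[OF h(5) h(4) c(1)] .
      have "gdist ER a g \<le> gdist ER a c + gdist ER c g" using metric_onD(4)[OF R_metric ab(1) cc h(4)] .
      moreover have "gdist ER c g \<le> 1" using same_coset_R[OF h(5) h(4) c(1) gC] .
      ultimately show "gdist ER a g - 1 \<le> z" using c(2) by linarith
    qed
    have "\<phi> x = gdist ER a g" "\<phi> y = I + 1 / 2" unfolding \<phi>_def I_def using h by auto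
    thus ?thesis using I1 I2 h(3) by simp
  qed
  have "\<bar>\<phi> (Inl a) - \<phi> (Inl b)\<bar> \<le> 1 * gdist EZ (Inl a) (Inl b)"
    by (rule lip_gdist[where V'=UNIV and d'="\<lambda>x y. \<bar>x - y\<bar>" and V=VZ and E=EZ and F=\<phi> and L=1, OF abs_metric Z_ein _ ed _ Z_conn])
      (use ab VZ_mem in auto)
  moreover have "\<phi> (Inl a) = 0" unfolding \<phi>_def using metric_onD(3)[OF R_metric ab(1)] by simp
  moreover have "\<phi> (Inl b) = gdist ER a b" unfolding \<phi>_def by simp
  ultimately show ?thesis by simp
qed

definition fZ :: "'a + (nat \<times> 'a set) \<Rightarrow> 'a" where
  "fZ x = (case x of Inl a \<Rightarrow> a | Inr u \<Rightarrow> Fc u)"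

lemma fZ_props:
  assumes x: "x \<in> VZ"
  shows "fZ x \<in> carrier G" "gdist EZ x (Inl (fZ x)) \<le> 1 / 2"
proof -
  have "fZ x \<in> carrier G \<and> gdist EZ x (Inl (fZ x)) \<le> 1 / 2"
  proof (cases "\<exists>a\<in>carrier G. x = Inl a")
    case True
    then obtain a where a: "a \<in> carrier G" "x = Inl a" by blast
    thus ?thesis using metric_onD(3)[OF Z_metric x] unfolding fZ_def by simp
  next
    case False
    then obtain u where u: "u \<in> VC" "x = Inr u" using x VZ_mem by blast
    obtain i g where ig: "u = (i, g <# H i)" "i \<in> {1..m}" "g \<in> carrier G" using u VC_mem by blast
    have fc: "Fc u \<in> carrier G" "Fc u <# H i = g <# H i" using Fc_mem[OF ig] by auto
    have "(Inl (Fc u), Inr (i, Fc u <# H i), 1 / 2) \<in> EZ" using cone[OF fc(1) ig(2)] .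
    hence "(Inl (Fc u), x, 1 / 2) \<in> EZ" using fc(2) u(2) ig(1) by simp
    hence "gdist EZ x (Inl (Fc u)) \<le> 1 / 2" using conn_dist_step[OF Z_nn, of "1/2" x "Inl (Fc u)"] by simp
    thus ?thesis using fc u(2) unfolding fZ_def by simp
  qed
  thus "fZ x \<in> carrier G" "gdist EZ x (Inl (fZ x)) \<le> 1 / 2" by auto
qed

theorem part2: "(\<exists>\<delta>. fourpt VR (gdist ER) \<delta>) \<longleftrightarrow> (\<exists>\<delta>. fourpt VZ (gdist EZ) \<delta>)"
proof
  assume "\<exists>\<delta>. fourpt VR (gdist ER) \<delta>"
  then obtain \<delta> where f: "fourpt VR (gdist ER) \<delta>" by blast
  have cl: "\<bar>gdist ER (fZ x) (fZ y) - gdist EZ x y\<bar> \<le> 1" if xy: "x \<in> VZ" "y \<in> VZ" for x y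
  proof -
    have V: "Inl (fZ x) \<in> VZ" "Inl (fZ y) \<in> VZ" using fZ_props(1) xy VZ_mem by blast+
    have e: "gdist EZ (Inl (fZ x)) (Inl (fZ y)) = gdist ER (fZ x) (fZ y)"
      using DZ1 DZ2 fZ_props(1) xy by (meson order_antisym)
    have "gdist EZ x y \<le> gdist EZ x (Inl (fZ x)) + gdist EZ (Inl (fZ x)) (Inl (fZ y)) + gdist EZ (Inl (fZ y)) y"
      using tri3[OF Z_metric xy(1) V xy(2)] .
    moreover have "gdist EZ (Inl (fZ y)) y = gdist EZ y (Inl (fZ y))" using metric_onD(2)[OF Z_metric V(2) xy(2)] .
    moreover have "gdist EZ (Inl (fZ x)) (Inl (fZ y)) \<le> gdist EZ (Inl (fZ x)) x + gdist EZ x y + gdist EZ y (Inl (fZ y))"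
      using tri3[OF Z_metric V(1) xy V(2)] .
    moreover have "gdist EZ (Inl (fZ x)) x = gdist EZ x (Inl (fZ x))" using metric_onD(2)[OF Z_metric V(1) xy(1)] .
    ultimately show ?thesis using e fZ_props(2)[OF xy(1)] fZ_props(2)[OF xy(2)] by linarith
  qed
  have "fourpt VZ (gdist EZ) (\<delta> + 3 * 1)" by (rule fourpt_transfer[OF f fZ_props(1) cl])
  thus "\<exists>\<delta>. fourpt VZ (gdist EZ) \<delta>" by blast
next
  assume "\<exists>\<delta>. fourpt VZ (gdist EZ) \<delta>"
  then obtain \<delta> where f: "fourpt VZ (gdist EZ) \<delta>" by blast
  have IV: "Inl x \<in> VZ" if "x \<in> VR" for x using that VZ_mem by blast
  have cl: "\<bar>gdist EZ (Inl x) (Inl y) - gdist ER x y\<bar> \<le> 0" if xy: "x \<in> VR" "y \<in> VR" for x y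
    using DZ1[OF xy] DZ2[OF xy] by simp
  have "fourpt VR (gdist ER) (\<delta> + 3 * 0)" by (rule fourpt_transfer[OF f IV cl])
  thus "\<exists>\<delta>. fourpt VR (gdist ER) \<delta>" by blast
qed

end


lemma hyp_iff: "hyperbolic_graph V E \<longleftrightarrow> graph_connected V E \<and> (\<exists>\<delta>. fourpt V (gdist E) \<delta>)"
  unfolding hyperbolic_graph_def fourpt_def by simp

theorem lemma2p1:
  fixes G :: "('a, 'b) monoid_scheme" and H :: "nat \<Rightarrow> 'a set" and m :: nat and S :: "'a set"
  assumes "group G"
    and "m \<ge> 1"
    and "\<And>i. i \<in> {1..m} \<Longrightarrow> subgroup (H i) G"
    and "finite S" and "S \<subseteq> carrier G"
    and "generate G (S \<union> (\<Union>i\<in>{1..m}. H i)) = carrier G"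
  shows "(hyperbolic_graph (carrier G) (rel_cayley_edges G S H m) \<longleftrightarrow>
            hyperbolic_graph (coset_vertices G H m) (coset_edges G S H m))
       \<and> (generate G S = carrier G \<longrightarrow>
            (hyperbolic_graph (carrier G) (rel_cayley_edges G S H m) \<longleftrightarrow>
             hyperbolic_graph (coned_vertices G H m) (coned_edges G S H m)))"
proof -
  interpret hsetting G H m S
    by (rule hsetting.intro) (use assms in auto)
  show ?thesis unfolding hyp_iff using part1 part2 R_conn C_conn Z_conn by blast
qed

end
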